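(* There is a pseudo-double functor $\mathbb{O}\mathbf{rg}\to\mathbb{E}\mathbf{ff}^{\mathrm{el}}$ which is the identity on objects and vertical morphisms and is fully faithful on the category of horizontal morphisms and squares, with essential image the linear elementary effects handlers (those whose carrier is of the form $S\mathcal{y}$ for a set $S$). On horizontal morphisms it is given, for each set $S$, by the natural bijection between $[q,p]$-coalgebra structures $S\to[q,p]\triangleleft S$ and polynomial maps $S\mathcal{y}\triangleleft q\to p\triangleleft S\mathcal{y}$.
   Context: Polynomials $p=\sum_{I\in p(1)}\mathcal{y}^{p[I]}$ form $\mathbf{Poly}$ (morphisms are natural transformations: $\phi_1\colon p(1)\to q(1)$ and $\phi^\#_I\colon q[\phi_1I]\to p[I]$), with composition $\triangleleft$ and Dirichlet tensor $\otimes$ ($(p\otimes q)(1)=p(1)\times q(1)$, $(p\otimes q)[I,J]=p[I]\times q[J]$, unit $\mathcal{y}$). A set $S$ is identified with the constant polynomial, and $S\mathcal{y}$ is the linear polynomial with positions $S$ and one direction each. The closure of $\otimes$ is $[q,p]\coloneqq\sum_{\phi\colon q\to p}\mathcal{y}^{\sum_{I\in q(1)}p[\phi_1I]}$, with $(-\otimes q)\dashv[q,-]$; a $[q,p]$-coalgebra is a set $S$ with a function $\vartheta\colon S\to[q,p]\triangleleft S$. The double category $\mathbb{O}\mathbf{rg}$ has objects polynomials, vertical morphisms polynomial maps, horizontal morphisms from $q$ to $p$ the $[q,p]$-coalgebras (composed by taking the product of state sets and using the canonical maps $([q,p]\triangleleft T)\otimes([r,q]\triangleleft S)\to([q,p]\otimes[r,q])\triangleleft(T\times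 S)\to[r,p]\triangleleft(T\times S)$), and squares from $(S,\vartheta)$ (from $q$ to $p$) to $(S',\vartheta')$ (from $q'$ to $p'$) over $\psi\colon q\to q'$, $\varphi\colon p\to p'$ the functions $f\colon S\to S'$ with $([q,p']\triangleleft f)\circ([q,\varphi]\triangleleft S)\circ\vartheta=([\psi,p']\triangleleft S')\circ\vartheta'\circ f$. Elementary effects handlers: for polynomials $p,q$, a $(p,q)$-effects handler is a polynomial $s$ with a morphism $\varphi\colon s\triangleleft q\to p\triangleleft s$; it is linear if $s=S\mathcal{y}$. $\mathbb{E}\mathbf{ff}^{\mathrm{el}}$ is the pseudo-double category with objects polynomials, vertical morphisms polynomial maps, horizontal morphisms from $q$ to $p$ the $(p,q)$-effects handlers, composite of $(s,\varphi)$ (a $(p,q)$-handler) and $(t,\psi)$ (a $(q,r)$-handler) given by $s\triangleleft t$ with structure map $(\varphi\triangleleft t)\circ(s\triangleleft\psi)$, and squares over $\psi\colon q\to q'$, $\varphi\colon p\to p'$ the maps $\gamma\colon s\to s'$ with $(\varphi\triangleleft\gamma)\circ\vartheta=\vartheta'\circ(\gamma\triangleleft\psi)$. *)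

theory Defs
  imports "HOL-Library.FuncSet"
begin

section \<open>Polynomials, morphisms, composition\<close>

text \<open>Positions and directions live in HOL types; all functions are
extensional (undefined outside their domain) so that HOL equality is equality
of morphisms.\<close>

type_synonym ('i, 'd) poly = "'i set \<times> ('i \<Rightarrow> 'd set)"

definition pos :: "('i, 'd) poly \<Rightarrow> 'i set" where "pos p = fst p"
definition dir :: "('i, 'd) poly \<Rightarrow> 'i \<Rightarrow> 'd set" where "dir p I = snd p I"

text \<open>A morphism p -> q: on positions phi1 : p(1) -> q(1), on directions
phi# I : q[phi1 I] -> p[I].\<close>

type_synonym ('i, 'd, 'j, 'e) pmor = "('i \<Rightarrow> 'j) \<times> ('i \<Rightarrow> 'e \<Rightarrow> 'd)"

definition is_pmor :: "('i, 'd) poly \<Rightarrow> ('j, 'e) poly \<Rightarrow> ('i, 'd, 'j, 'e) pmor \<Rightarrow> bool" where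
  "is_pmor p q \<phi> \<longleftrightarrow>
     fst \<phi> \<in> pos p \<rightarrow>\<^sub>E pos q \<and>
     (\<forall>I\<in>pos p. snd \<phi> I \<in> dir q (fst \<phi> I) \<rightarrow>\<^sub>E dir p I) \<and>
     (\<forall>I. I \<notin> pos p \<longrightarrow> snd \<phi> I = undefined)"

definition pid :: "('i, 'd) poly \<Rightarrow> ('i, 'd, 'i, 'd) pmor" where
  "pid p = (\<lambda>I\<in>pos p. I, \<lambda>I\<in>pos p. \<lambda>d\<in>dir p I. d)"

text \<open>mcomp p r psi phi is the composite psi o phi : p -> r.\<close>
definition mcomp :: "('i, 'd) poly \<Rightarrow> ('k, 'f) poly \<Rightarrow> ('j, 'e, 'k, 'f) pmor
    \<Rightarrow> ('i, 'd, 'j, 'e) pmor \<Rightarrow> ('i, 'd, 'k, 'f) pmor" where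
  "mcomp p r \<psi> \<phi> =
     (\<lambda>I\<in>pos p. fst \<psi> (fst \<phi> I),
      \<lambda>I\<in>pos p. \<lambda>x\<in>dir r (fst \<psi> (fst \<phi> I)). snd \<phi> I (snd \<psi> (fst \<phi> I) x))"

definition is_iso :: "('i, 'd) poly \<Rightarrow> ('j, 'e) poly \<Rightarrow> ('i, 'd, 'j, 'e) pmor \<Rightarrow> bool" where
  "is_iso p q \<gamma> \<longleftrightarrow> is_pmor p q \<gamma> \<and>
     (\<exists>\<delta>. is_pmor q p \<delta> \<and> mcomp p p \<delta> \<gamma> = pid p \<and> mcomp q q \<gamma> \<delta> = pid q)"

definition tri :: "('i, 'd) poly \<Rightarrow> ('j, 'e) poly \<Rightarrow> ('i \<times> ('d \<Rightarrow> 'j), 'd \<times> 'e) poly" where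
  "tri p q = ({(I, f). I \<in> pos p \<and> f \<in> dir p I \<rightarrow>\<^sub>E pos q},
              \<lambda>(I, f). Sigma (dir p I) (\<lambda>d. dir q (f d)))"

definition tri_mor :: "('i, 'd) poly \<Rightarrow> ('j, 'e) poly \<Rightarrow> ('i', 'd') poly \<Rightarrow> ('j', 'e') poly
    \<Rightarrow> ('i, 'd, 'i', 'd') pmor \<Rightarrow> ('j, 'e, 'j', 'e') pmor
    \<Rightarrow> ('i \<times> ('d \<Rightarrow> 'j), 'd \<times> 'e, 'i' \<times> ('d' \<Rightarrow> 'j'), 'd' \<times> 'e') pmor" where
  "tri_mor p q p' q' \<phi> \<psi> =
    (\<lambda>(I, f)\<in>pos (tri p q).
        (fst \<phi> I, \<lambda>d'\<in>dir p' (fst \<phi> I). fst \<psi> (f (snd \<phi> I d'))),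
     \<lambda>(I, f)\<in>pos (tri p q).
        \<lambda>(d', e')\<in>Sigma (dir p' (fst \<phi> I)) (\<lambda>d'. dir q' (fst \<psi> (f (snd \<phi> I d')))).
          (snd \<phi> I d', snd \<psi> (f (snd \<phi> I d')) e'))"

definition assoc_fwd :: "('i, 'd) poly \<Rightarrow> ('j, 'e) poly \<Rightarrow> ('k, 'f) poly
    \<Rightarrow> (('i \<times> ('d \<Rightarrow> 'j)) \<times> ('d \<times> 'e \<Rightarrow> 'k), ('d \<times> 'e) \<times> 'f,
        'i \<times> ('d \<Rightarrow> 'j \<times> ('e \<Rightarrow> 'k)), 'd \<times> ('e \<times> 'f)) pmor" where
  "assoc_fwd p q r =
    (\<lambda>((I, f), g)\<in>pos (tri (tri p q) r).
        (I, \<lambda>d\<in>dir p I. (f d, \<lambda>e\<in>dir q (f d). g (d, e))),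
     \<lambda>((I, f), g)\<in>pos (tri (tri p q) r).
        \<lambda>(d, (e, x))\<in>Sigma (dir p I) (\<lambda>d. Sigma (dir q (f d)) (\<lambda>e. dir r (g (d, e)))).
          ((d, e), x))"

definition assoc_bwd :: "('i, 'd) poly \<Rightarrow> ('j, 'e) poly \<Rightarrow> ('k, 'f) poly
    \<Rightarrow> ('i \<times> ('d \<Rightarrow> 'j \<times> ('e \<Rightarrow> 'k)), 'd \<times> ('e \<times> 'f),
        ('i \<times> ('d \<Rightarrow> 'j)) \<times> ('d \<times> 'e \<Rightarrow> 'k), ('d \<times> 'e) \<times> 'f) pmor" where
  "assoc_bwd p q r =
    (\<lambda>(I, h)\<in>pos (tri p (tri q r)).
        ((I, \<lambda>d\<in>dir p I. fst (h d)),
         \<lambda>(d, e)\<in>Sigma (dir p I) (\<lambda>d. dir q (fst (h d))). snd (h d) e),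
     \<lambda>(I, h)\<in>pos (tri p (tri q r)).
        \<lambda>((d, e), x)\<in>Sigma (Sigma (dir p I) (\<lambda>d. dir q (fst (h d)))) (\<lambda>(d, e). dir r (snd (h d) e)).
          (d, (e, x)))"

definition cpoly :: "'s set \<Rightarrow> ('s, unit) poly" where
  "cpoly S = (S, \<lambda>_. {})"

text \<open>The linear polynomial S y; the polynomial y is lin {()}.\<close>
definition lin :: "'s set \<Rightarrow> ('s, unit) poly" where
  "lin S = (S, \<lambda>_. {()})"

definition linmap :: "'s set \<Rightarrow> ('s \<Rightarrow> 't) \<Rightarrow> ('s, unit, 't, unit) pmor" where
  "linmap S f = (\<lambda>x\<in>S. f x, \<lambda>x\<in>S. \<lambda>u\<in>{()}. ())"

definition cmor :: "'s set \<Rightarrow> ('s \<Rightarrow> 't) \<Rightarrow> ('s, unit, 't, unit) pmor" where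
  "cmor S f = (\<lambda>x\<in>S. f x, \<lambda>x\<in>S. \<lambda>u\<in>({}::unit set). undefined)"

definition ihom :: "('j, 'e) poly \<Rightarrow> ('i, 'd) poly
    \<Rightarrow> (('j \<Rightarrow> 'i) \<times> ('j \<Rightarrow> 'd \<Rightarrow> 'e), 'j \<times> 'd) poly" where
  "ihom q p = ({\<chi>. is_pmor q p \<chi>}, \<lambda>\<chi>. Sigma (pos q) (\<lambda>J. dir p (fst \<chi> J)))"

definition ihom_post :: "('j, 'e) poly \<Rightarrow> ('i, 'd) poly \<Rightarrow> ('i', 'd') poly
    \<Rightarrow> ('i, 'd, 'i', 'd') pmor
    \<Rightarrow> (('j \<Rightarrow> 'i) \<times> ('j \<Rightarrow> 'd \<Rightarrow> 'e), 'j \<times> 'd,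
        ('j \<Rightarrow> 'i') \<times> ('j \<Rightarrow> 'd' \<Rightarrow> 'e), 'j \<times> 'd') pmor" where
  "ihom_post q p p' \<phi> =
    (\<lambda>\<chi>\<in>pos (ihom q p). mcomp q p' \<phi> \<chi>,
     \<lambda>\<chi>\<in>pos (ihom q p). \<lambda>(J, d')\<in>dir (ihom q p') (mcomp q p' \<phi> \<chi>).
        (J, snd \<phi> (fst \<chi> J) d'))"

definition ihom_pre :: "('j, 'e) poly \<Rightarrow> ('j', 'e') poly \<Rightarrow> ('i, 'd) poly
    \<Rightarrow> ('j, 'e, 'j', 'e') pmor
    \<Rightarrow> (('j' \<Rightarrow> 'i) \<times> ('j' \<Rightarrow> 'd \<Rightarrow> 'e'), 'j' \<times> 'd,
        ('j \<Rightarrow> 'i) \<times> ('j \<Rightarrow> 'd \<Rightarrow> 'e), 'j \<times> 'd) pmor" where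
  "ihom_pre q q' p \<psi> =
    (\<lambda>\<chi>\<in>pos (ihom q' p). mcomp q p \<chi> \<psi>,
     \<lambda>\<chi>\<in>pos (ihom q' p). \<lambda>(J, d)\<in>dir (ihom q p) (mcomp q p \<chi> \<psi>). (fst \<psi> J, d))"

section \<open>The double category Org\<close>

text \<open>A horizontal morphism from q to p: a [q,p]-coalgebra structure on S,
  theta : S -> [q,p] \<triangleleft> S.\<close>
definition is_coalg :: "('i, 'd) poly \<Rightarrow> ('j, 'e) poly \<Rightarrow> 's set
    \<Rightarrow> ('s \<Rightarrow> (('j \<Rightarrow> 'i) \<times> ('j \<Rightarrow> 'd \<Rightarrow> 'e)) \<times> ('j \<times> 'd \<Rightarrow> 's)) \<Rightarrow> bool" where
  "is_coalg p q S \<theta> \<longleftrightarrow> \<theta> \<in> S \<rightarrow>\<^sub>E pos (tri (ihom q p) (cpoly S))"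

definition org_comp :: "('i, 'd) poly \<Rightarrow> ('j, 'e) poly \<Rightarrow> ('k, 'f) poly
    \<Rightarrow> 't set \<Rightarrow> ('t \<Rightarrow> (('j \<Rightarrow> 'i) \<times> ('j \<Rightarrow> 'd \<Rightarrow> 'e)) \<times> ('j \<times> 'd \<Rightarrow> 't))
    \<Rightarrow> 's set \<Rightarrow> ('s \<Rightarrow> (('k \<Rightarrow> 'j) \<times> ('k \<Rightarrow> 'e \<Rightarrow> 'f)) \<times> ('k \<times> 'e \<Rightarrow> 's))
    \<Rightarrow> ('t \<times> 's \<Rightarrow> (('k \<Rightarrow> 'i) \<times> ('k \<Rightarrow> 'd \<Rightarrow> 'f)) \<times> ('k \<times> 'd \<Rightarrow> 't \<times> 's))" where
  "org_comp p q r T \<theta> S \<eta> =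
    (\<lambda>(t, s)\<in>T \<times> S.
       (mcomp r p (fst (\<theta> t)) (fst (\<eta> s)),
        \<lambda>(K, d)\<in>dir (ihom r p) (mcomp r p (fst (\<theta> t)) (fst (\<eta> s))).
          (snd (\<theta> t) (fst (fst (\<eta> s)) K, d),
           snd (\<eta> s) (K, snd (fst (\<theta> t)) (fst (fst (\<eta> s)) K) d))))"

definition org_id :: "('i, 'd) poly \<Rightarrow> (unit \<Rightarrow> (('i \<Rightarrow> 'i) \<times> ('i \<Rightarrow> 'd \<Rightarrow> 'd)) \<times> ('i \<times> 'd \<Rightarrow> unit))" where
  "org_id p = (\<lambda>u\<in>{()}. (pid p, \<lambda>x\<in>dir (ihom p p) (pid p). ()))"

text \<open>Squares in Org from (S, theta) (q to p) to (S', theta') (q' to p')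
  over psi : q -> q' and phi : p -> p':
  ([q,p'] \<triangleleft> f) o ([q,phi] \<triangleleft> S) o theta = ([psi,p'] \<triangleleft> S') o theta' o f.\<close>
definition org_sq :: "('i, 'd) poly \<Rightarrow> ('j, 'e) poly \<Rightarrow> 's set
    \<Rightarrow> ('s \<Rightarrow> (('j \<Rightarrow> 'i) \<times> ('j \<Rightarrow> 'd \<Rightarrow> 'e)) \<times> ('j \<times> 'd \<Rightarrow> 's))
    \<Rightarrow> ('i', 'd') poly \<Rightarrow> ('j', 'e') poly \<Rightarrow> 's' set
    \<Rightarrow> ('s' \<Rightarrow> (('j' \<Rightarrow> 'i') \<times> ('j' \<Rightarrow> 'd' \<Rightarrow> 'e')) \<times> ('j' \<times> 'd' \<Rightarrow> 's'))
    \<Rightarrow> ('j, 'e, 'j', 'e') pmor \<Rightarrow> ('i, 'd, 'i', 'd') pmor \<Rightarrow> ('s \<Rightarrow> 's') \<Rightarrow> bool" where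
  "org_sq p q S \<theta> p' q' S' \<theta>' \<psi> \<phi> f \<longleftrightarrow>
     f \<in> S \<rightarrow>\<^sub>E S' \<and>
     (\<forall>x\<in>S.
        fst (tri_mor (ihom q p') (cpoly S) (ihom q p') (cpoly S') (pid (ihom q p')) (cmor S f))
          (fst (tri_mor (ihom q p) (cpoly S) (ihom q p') (cpoly S) (ihom_post q p p' \<phi>) (pid (cpoly S)))
             (\<theta> x))
        =
        fst (tri_mor (ihom q' p') (cpoly S') (ihom q p') (cpoly S') (ihom_pre q q' p' \<psi>) (pid (cpoly S')))
          (\<theta>' (f x)))"

section \<open>The pseudo-double category Eff^el\<close>

text \<open>A (p,q)-effects handler (horizontal from q to p): s with s \<triangleleft> q -> p \<triangleleft> s.\<close>
definition is_handler :: "('i, 'd) poly \<Rightarrow> ('j, 'e) poly \<Rightarrow> ('k, 'f) poly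
    \<Rightarrow> ('k \<times> ('f \<Rightarrow> 'j), 'f \<times> 'e, 'i \<times> ('d \<Rightarrow> 'k), 'd \<times> 'f) pmor \<Rightarrow> bool" where
  "is_handler p q s \<eta> \<longleftrightarrow> is_pmor (tri s q) (tri p s) \<eta>"

text \<open>Composite of (s, phi) (a (p,q)-handler) and (t, psi) (a (q,r)-handler):
  carrier s \<triangleleft> t, structure (phi \<triangleleft> t) o (s \<triangleleft> psi), with the associators made explicit.\<close>
definition eff_comp :: "('i, 'd) poly \<Rightarrow> ('j, 'e) poly \<Rightarrow> ('k, 'f) poly
    \<Rightarrow> ('a, 'b) poly \<Rightarrow> ('a \<times> ('b \<Rightarrow> 'j), 'b \<times> 'e, 'i \<times> ('d \<Rightarrow> 'a), 'd \<times> 'b) pmor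
    \<Rightarrow> ('c, 'g) poly \<Rightarrow> ('c \<times> ('g \<Rightarrow> 'k), 'g \<times> 'f, 'j \<times> ('e \<Rightarrow> 'c), 'e \<times> 'g) pmor
    \<Rightarrow> (('a \<times> ('b \<Rightarrow> 'c)) \<times> ('b \<times> 'g \<Rightarrow> 'k), ('b \<times> 'g) \<times> 'f,
        'i \<times> ('d \<Rightarrow> 'a \<times> ('b \<Rightarrow> 'c)), 'd \<times> ('b \<times> 'g)) pmor" where
  "eff_comp p q r s \<phi> t \<psi> =
    (let A = tri (tri s t) r in
     mcomp A (tri p (tri s t)) (assoc_fwd p s t)
      (mcomp A (tri (tri p s) t) (tri_mor (tri s q) t (tri p s) t \<phi> (pid t))
       (mcomp A (tri (tri s q) t) (assoc_bwd s q t)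
        (mcomp A (tri s (tri q t)) (tri_mor s (tri t r) s (tri q t) (pid s) \<psi>)
          (assoc_fwd s t r)))))"

definition eff_id :: "('i, 'd) poly \<Rightarrow> (unit \<times> (unit \<Rightarrow> 'i), unit \<times> 'd, 'i \<times> ('d \<Rightarrow> unit), 'd \<times> unit) pmor" where
  "eff_id p =
    (\<lambda>(u, f)\<in>pos (tri (lin {()}) p). (f (), \<lambda>d\<in>dir p (f ()). ()),
     \<lambda>(u, f)\<in>pos (tri (lin {()}) p). \<lambda>(d, v)\<in>dir p (f ()) \<times> {()}. ((), d))"

definition eff_sq :: "('i, 'd) poly \<Rightarrow> ('j, 'e) poly \<Rightarrow> ('k, 'f) poly
    \<Rightarrow> ('k \<times> ('f \<Rightarrow> 'j), 'f \<times> 'e, 'i \<times> ('d \<Rightarrow> 'k), 'd \<times> 'f) pmor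
    \<Rightarrow> ('i', 'd') poly \<Rightarrow> ('j', 'e') poly \<Rightarrow> ('k', 'f') poly
    \<Rightarrow> ('k' \<times> ('f' \<Rightarrow> 'j'), 'f' \<times> 'e', 'i' \<times> ('d' \<Rightarrow> 'k'), 'd' \<times> 'f') pmor
    \<Rightarrow> ('j, 'e, 'j', 'e') pmor \<Rightarrow> ('i, 'd, 'i', 'd') pmor \<Rightarrow> ('k, 'f, 'k', 'f') pmor \<Rightarrow> bool" where
  "eff_sq p q s \<theta> p' q' s' \<theta>' \<psi> \<phi> \<gamma> \<longleftrightarrow>
     is_pmor s s' \<gamma> \<and>
     mcomp (tri s q) (tri p' s') (tri_mor p s p' s' \<phi> \<gamma>) \<theta>
       = mcomp (tri s q) (tri p' s') \<theta>' (tri_mor s q s' q' \<gamma> \<psi>)"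

definition lunit :: "('i, 'd) poly \<Rightarrow> (unit \<times> (unit \<Rightarrow> 'i), unit \<times> 'd, 'i, 'd) pmor" where
  "lunit a = (\<lambda>(u, f)\<in>pos (tri (lin {()}) a). f (),
              \<lambda>(u, f)\<in>pos (tri (lin {()}) a). \<lambda>e\<in>dir a (f ()). ((), e))"

definition runit :: "('i, 'd) poly \<Rightarrow> ('i \<times> ('d \<Rightarrow> unit), 'd \<times> unit, 'i, 'd) pmor" where
  "runit a = (\<lambda>(I, f)\<in>pos (tri a (lin {()})). I,
              \<lambda>(I, f)\<in>pos (tri a (lin {()})). \<lambda>d\<in>dir a I. (d, ()))"

section \<open>The functor Org -> Eff^el\<close>

text \<open>The natural bijection: a coalgebra structure theta : S -> [q,p] \<triangleleft> S gives
  the map S y \<triangleleft> q -> p \<triangleleft> S y sending (x, J) to (phi1 J, d |-> k (J, d)) where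
  theta x = (phi, k), with backward map on directions d |-> phi# J d.\<close>
definition Phi :: "('i, 'd) poly \<Rightarrow> ('j, 'e) poly \<Rightarrow> 's set
    \<Rightarrow> ('s \<Rightarrow> (('j \<Rightarrow> 'i) \<times> ('j \<Rightarrow> 'd \<Rightarrow> 'e)) \<times> ('j \<times> 'd \<Rightarrow> 's))
    \<Rightarrow> ('s \<times> (unit \<Rightarrow> 'j), unit \<times> 'e, 'i \<times> ('d \<Rightarrow> 's), 'd \<times> unit) pmor" where
  "Phi p q S \<theta> =
    (\<lambda>(x, f)\<in>pos (tri (lin S) q).
        (fst (fst (\<theta> x)) (f ()), \<lambda>d\<in>dir p (fst (fst (\<theta> x)) (f ())). snd (\<theta> x) (f (), d)),
     \<lambda>(x, f)\<in>pos (tri (lin S) q).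
        \<lambda>(d, u)\<in>dir p (fst (fst (\<theta> x)) (f ())) \<times> {()}. ((), snd (fst (\<theta> x)) (f ()) d))"

definition comp_iso :: "'t set \<Rightarrow> 's set \<Rightarrow> ('t \<times> (unit \<Rightarrow> 's), unit \<times> unit, 't \<times> 's, unit) pmor" where
  "comp_iso T S = (\<lambda>(t, g)\<in>pos (tri (lin T) (lin S)). (t, g ()),
                   \<lambda>(t, g)\<in>pos (tri (lin T) (lin S)). \<lambda>u\<in>{()}. ((), ()))"

end

theory Submission
  imports Defs
begin


lemma pos_tri[simp]: "pos (tri p q) = {(I, f). I \<in> pos p \<and> f \<in> dir p I \<rightarrow>\<^sub>E pos q}"
  by (simp add: tri_def pos_def)
lemma dir_tri[simp]: "dir (tri p q) (I, f) = Sigma (dir p I) (\<lambda>d. dir q (f d))"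
  by (simp add: tri_def dir_def)
lemma pos_lin[simp]: "pos (lin S) = S" by (simp add: lin_def pos_def)
lemma dir_lin[simp]: "dir (lin S) x = {()}" by (simp add: lin_def dir_def)
lemma pos_cpoly[simp]: "pos (cpoly S) = S" by (simp add: cpoly_def pos_def)
lemma dir_cpoly[simp]: "dir (cpoly S) x = {}" by (simp add: cpoly_def dir_def)
lemma pos_ihom[simp]: "pos (ihom q p) = {\<chi>. is_pmor q p \<chi>}" by (simp add: ihom_def pos_def)
lemma dir_ihom[simp]: "dir (ihom q p) \<chi> = Sigma (pos q) (\<lambda>J. dir p (fst \<chi> J))" by (simp add: ihom_def dir_def)
lemma unit_in[simp]: "(u::unit) \<in> {()}" by simp
lemma unit_restrict[simp]: "(\<lambda>u\<in>{()}. f u) = f" by auto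

definition Psi :: "('i, 'd) poly \<Rightarrow> ('j, 'e) poly \<Rightarrow> 's set
    \<Rightarrow> ('s \<times> (unit \<Rightarrow> 'j), unit \<times> 'e, 'i \<times> ('d \<Rightarrow> 's), 'd \<times> unit) pmor
    \<Rightarrow> ('s \<Rightarrow> (('j \<Rightarrow> 'i) \<times> ('j \<Rightarrow> 'd \<Rightarrow> 'e)) \<times> ('j \<times> 'd \<Rightarrow> 's))" where
  "Psi p q S \<eta> = (\<lambda>x\<in>S.
     ((\<lambda>J\<in>pos q. fst (fst \<eta> (x, \<lambda>u. J)),
       \<lambda>J\<in>pos q. \<lambda>d\<in>dir p (fst (fst \<eta> (x, \<lambda>u. J))). snd (snd \<eta> (x, \<lambda>u. J) (d, ()))),
      \<lambda>(J, d)\<in>Sigma (pos q) (\<lambda>J. dir p (fst (fst \<eta> (x, \<lambda>u. J)))). snd (fst \<eta> (x, \<lambda>u. J)) d))"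

lemma pmor_pos: "is_pmor p q \<phi> \<Longrightarrow> I \<in> pos p \<Longrightarrow> fst \<phi> I \<in> pos q"
  by (auto simp: is_pmor_def)
lemma pmor_dir: "is_pmor p q \<phi> \<Longrightarrow> I \<in> pos p \<Longrightarrow> d \<in> dir q (fst \<phi> I) \<Longrightarrow> snd \<phi> I d \<in> dir p I"
  by (auto simp: is_pmor_def)
lemma pmor_ext1: "is_pmor p q \<phi> \<Longrightarrow> I \<notin> pos p \<Longrightarrow> fst \<phi> I = undefined"
  by (auto simp: is_pmor_def PiE_def extensional_def)
lemma pmor_ext2: "is_pmor p q \<phi> \<Longrightarrow> I \<notin> pos p \<Longrightarrow> snd \<phi> I = undefined"
  by (auto simp: is_pmor_def)
lemma pmor_ext3: "is_pmor p q \<phi> \<Longrightarrow> I \<in> pos p \<Longrightarrow> d \<notin> dir q (fst \<phi> I) \<Longrightarrow> snd \<phi> I d = undefined"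
  by (auto simp: is_pmor_def PiE_def extensional_def)
lemma is_pmorI:
  assumes "\<And>I. I \<in> pos p \<Longrightarrow> fst \<phi> I \<in> pos q"
    "\<And>I d. I \<in> pos p \<Longrightarrow> d \<in> dir q (fst \<phi> I) \<Longrightarrow> snd \<phi> I d \<in> dir p I"
    "\<And>I. I \<notin> pos p \<Longrightarrow> fst \<phi> I = undefined"
    "\<And>I. I \<notin> pos p \<Longrightarrow> snd \<phi> I = undefined"
    "\<And>I d. I \<in> pos p \<Longrightarrow> d \<notin> dir q (fst \<phi> I) \<Longrightarrow> snd \<phi> I d = undefined"
  shows "is_pmor p q \<phi>"
  using assms by (auto simp: is_pmor_def PiE_def extensional_def)

lemma coalgD:
  assumes "is_coalg p q S \<theta>" "x \<in> S"
  shows "is_pmor q p (fst (\<theta> x))"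
    "\<And>J d. J \<in> pos q \<Longrightarrow> d \<in> dir p (fst (fst (\<theta> x)) J) \<Longrightarrow> snd (\<theta> x) (J, d) \<in> S"
    "\<And>J d. \<not> (J \<in> pos q \<and> d \<in> dir p (fst (fst (\<theta> x)) J)) \<Longrightarrow> snd (\<theta> x) (J, d) = undefined"
proof -
  have m: "\<theta> x \<in> pos (tri (ihom q p) (cpoly S))" using assms unfolding is_coalg_def by blast
  obtain \<chi> k where e: "\<theta> x = (\<chi>, k)" by (cases "\<theta> x")
  have h: "is_pmor q p \<chi>" "k \<in> Sigma (pos q) (\<lambda>J. dir p (fst \<chi> J)) \<rightarrow>\<^sub>E S" using m e by auto
  show "is_pmor q p (fst (\<theta> x))" using h e by simp
  show "\<And>J d. J \<in> pos q \<Longrightarrow> d \<in> dir p (fst (fst (\<theta> x)) J) \<Longrightarrow> snd (\<theta> x) (J, d) \<in> S"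
    using h e by auto
  show "\<And>J d. \<not> (J \<in> pos q \<and> d \<in> dir p (fst (fst (\<theta> x)) J)) \<Longrightarrow> snd (\<theta> x) (J, d) = undefined"
    using h e by (auto simp: PiE_iff extensional_def)
qed
lemma coalg_out: "is_coalg p q S \<theta> \<Longrightarrow> x \<notin> S \<Longrightarrow> \<theta> x = undefined"
  by (auto simp: is_coalg_def PiE_iff extensional_def)

lemma Phi_handler: "is_coalg p q S \<theta> \<Longrightarrow> is_handler p q (lin S) (Phi p q S \<theta>)"
  unfolding is_handler_def
  apply (rule is_pmorI)
  apply (auto simp: Phi_def PiE_iff extensional_def coalgD intro: pmor_pos pmor_dir[OF coalgD(1)] coalgD)
  done

lemma unit_fun[simp]: "(\<lambda>u::unit. f ()) = f" by auto

lemma handlerD: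
  assumes "is_handler p q (lin S) \<eta>" "x \<in> S" "J \<in> pos q"
  shows "fst (fst \<eta> (x, \<lambda>u. J)) \<in> pos p"
    "snd (fst \<eta> (x, \<lambda>u. J)) \<in> dir p (fst (fst \<eta> (x, \<lambda>u. J))) \<rightarrow>\<^sub>E S"
    "\<And>d. d \<in> dir p (fst (fst \<eta> (x, \<lambda>u. J))) \<Longrightarrow> snd (snd \<eta> (x, \<lambda>u. J) (d, ())) \<in> dir q J"
    "\<And>d. d \<in> dir p (fst (fst \<eta> (x, \<lambda>u. J))) \<Longrightarrow> snd (fst \<eta> (x, \<lambda>u. J)) d \<in> S"
proof -
  have P: "(x, \<lambda>u. J) \<in> pos (tri (lin S) q)" using assms by auto
  have m: "fst \<eta> (x, \<lambda>u. J) \<in> pos (tri p (lin S))"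
    using pmor_pos[OF assms(1)[unfolded is_handler_def] P] .
  then show "fst (fst \<eta> (x, \<lambda>u. J)) \<in> pos p"
    "snd (fst \<eta> (x, \<lambda>u. J)) \<in> dir p (fst (fst \<eta> (x, \<lambda>u. J))) \<rightarrow>\<^sub>E S"
    by (cases "fst \<eta> (x, \<lambda>u. J)"; auto)+
  then show "\<And>d. d \<in> dir p (fst (fst \<eta> (x, \<lambda>u. J))) \<Longrightarrow> snd (fst \<eta> (x, \<lambda>u. J)) d \<in> S"
    by (auto simp: PiE_iff)
  show "\<And>d. d \<in> dir p (fst (fst \<eta> (x, \<lambda>u. J))) \<Longrightarrow> snd (snd \<eta> (x, \<lambda>u. J) (d, ())) \<in> dir q J"
  proof -
    fix d assume d: "d \<in> dir p (fst (fst \<eta> (x, \<lambda>u. J)))"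
    have "(d, ()) \<in> dir (tri p (lin S)) (fst \<eta> (x, \<lambda>u. J))"
      using d by (cases "fst \<eta> (x, \<lambda>u. J)") auto
    from pmor_dir[OF assms(1)[unfolded is_handler_def] P this]
    show "snd (snd \<eta> (x, \<lambda>u. J) (d, ())) \<in> dir q J" by auto
  qed
qed

lemma Psi_coalg: "is_handler p q (lin S) \<eta> \<Longrightarrow> is_coalg p q S (Psi p q S \<eta>)"
  unfolding is_coalg_def
  apply (auto simp: Psi_def PiE_iff extensional_def handlerD intro!: is_pmorI)
  done

lemma unit_PiE[simp]: "(f::unit\<Rightarrow>_) \<in> {()} \<rightarrow>\<^sub>E A \<longleftrightarrow> f () \<in> A"
  by (auto simp: PiE_iff extensional_def)

lemma Phi_app1: "x \<in> S \<Longrightarrow> J \<in> pos q \<Longrightarrow> fst (Phi p q S \<theta>) (x, \<lambda>u. J) =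
   (fst (fst (\<theta> x)) J, \<lambda>d\<in>dir p (fst (fst (\<theta> x)) J). snd (\<theta> x) (J, d))"
  by (simp add: Phi_def)
lemma Phi_app2: "x \<in> S \<Longrightarrow> J \<in> pos q \<Longrightarrow> snd (Phi p q S \<theta>) (x, \<lambda>u. J) =
   (\<lambda>(d, u)\<in>dir p (fst (fst (\<theta> x)) J) \<times> {()}. ((), snd (fst (\<theta> x)) J d))"
  by (simp add: Phi_def)

lemma Psi_Phi: "is_coalg p q S \<theta> \<Longrightarrow> Psi p q S (Phi p q S \<theta>) = \<theta>"
proof (rule ext)
  fix x assume c: "is_coalg p q S \<theta>"
  show "Psi p q S (Phi p q S \<theta>) x = \<theta> x"
  proof (cases "x \<in> S")
    case False thus ?thesis using c by (simp add: Psi_def coalg_out)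
  next
    case True
    note D = coalgD[OF c True]
    have 1: "(\<lambda>J\<in>pos q. fst (fst (Phi p q S \<theta>) (x, \<lambda>u. J))) = fst (fst (\<theta> x))"
      by (rule ext) (simp add: Phi_app1 True pmor_ext1[OF D(1)])
    have 2: "(\<lambda>J\<in>pos q. \<lambda>d\<in>dir p (fst (fst (Phi p q S \<theta>) (x, \<lambda>u. J))).
               snd (snd (Phi p q S \<theta>) (x, \<lambda>u. J) (d, ()))) = snd (fst (\<theta> x))"
      by (intro ext) (auto simp: Phi_app1 Phi_app2 True pmor_ext2[OF D(1)] pmor_ext3[OF D(1)])
    have 3: "(\<lambda>(J, d)\<in>Sigma (pos q) (\<lambda>J. dir p (fst (fst (Phi p q S \<theta>) (x, \<lambda>u. J)))).
               snd (fst (Phi p q S \<theta>) (x, \<lambda>u. J)) d) = snd (\<theta> x)"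
    proof (rule ext)
      fix z
      show "(\<lambda>(J, d)\<in>Sigma (pos q) (\<lambda>J. dir p (fst (fst (Phi p q S \<theta>) (x, \<lambda>u. J)))).
               snd (fst (Phi p q S \<theta>) (x, \<lambda>u. J)) d) z = snd (\<theta> x) z"
      proof (cases z)
        case (Pair J d) note z = this
        show ?thesis unfolding z by (cases "J \<in> pos q") (auto simp: Phi_app1 True D(3))
      qed
    qed
    show ?thesis unfolding Psi_def using True 1 2 3 by simp
  qed
qed

lemma Phi_Psi: "is_handler p q (lin S) \<eta> \<Longrightarrow> Phi p q S (Psi p q S \<eta>) = \<eta>"
proof -
  assume h: "is_handler p q (lin S) \<eta>"
  have H: "is_pmor (tri (lin S) q) (tri p (lin S)) \<eta>" using h by (simp add: is_handler_def)
  have A: "fst (Phi p q S (Psi p q S \<eta>)) z = fst \<eta> z" for z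
  proof (cases "z \<in> pos (tri (lin S) q)")
    case False thus ?thesis by (simp add: Phi_def pmor_ext1[OF H])
  next
    case True
    then obtain x f where z: "z = (x, f)" "x \<in> S" "f () \<in> pos q" by auto
    have m: "fst \<eta> (x, f) \<in> pos (tri p (lin S))" using pmor_pos[OF H True] z by simp
    obtain I g where e: "fst \<eta> (x, f) = (I, g)" by (cases "fst \<eta> (x, f)")
    have g: "g \<in> dir p I \<rightarrow>\<^sub>E S" using m e by auto
    have r: "restrict g (dir p I) = g" using g by (simp add: PiE_restrict)
    show ?thesis using z e r by (simp add: Phi_def Psi_def cong: restrict_cong)
  qed
  have B: "snd (Phi p q S (Psi p q S \<eta>)) z = snd \<eta> z" for z
  proof (cases "z \<in> pos (tri (lin S) q)")
    case False thus ?thesis by (simp add: Phi_def pmor_ext2[OF H])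
  next
    case True
    then obtain x f where z: "z = (x, f)" "x \<in> S" "f () \<in> pos q" by auto
    obtain I g where e: "fst \<eta> (x, f) = (I, g)" by (cases "fst \<eta> (x, f)")
    show ?thesis
    proof (rule ext)
      fix w
      show "snd (Phi p q S (Psi p q S \<eta>)) z w = snd \<eta> z w"
      proof (cases "w \<in> dir p I \<times> {()}")
        case False
        have "w \<notin> dir (tri p (lin S)) (fst \<eta> z)" using False e z by auto
        then show ?thesis using z e False pmor_ext3[OF H True] by (simp add: Phi_def Psi_def)
      next
        case True
        then obtain d where w: "w = (d, ())" "d \<in> dir p I" by auto
        show ?thesis unfolding z(1) w(1) using z(2,3) e w(2) by (simp add: Phi_def Psi_def prod_eq_iff)
      qed
    qed
  qed
  show ?thesis using A B by (simp add: prod_eq_iff fun_eq_iff)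
qed

lemma pmor_eqI:
  assumes "is_pmor p q \<phi>" "is_pmor p q \<phi>'"
    "\<And>I. I \<in> pos p \<Longrightarrow> fst \<phi> I = fst \<phi>' I"
    "\<And>I d. I \<in> pos p \<Longrightarrow> d \<in> dir q (fst \<phi> I) \<Longrightarrow> snd \<phi> I d = snd \<phi>' I d"
  shows "\<phi> = \<phi>'"
proof (rule prod_eqI)
  show "fst \<phi> = fst \<phi>'"
    by (rule ext) (metis assms(1,2,3) pmor_ext1)
  show "snd \<phi> = snd \<phi>'"
  proof (intro ext)
    fix I d show "snd \<phi> I d = snd \<phi>' I d"
      by (metis assms pmor_ext2 pmor_ext3)
  qed
qed

lemma mcomp_pmor: "is_pmor p q \<phi> \<Longrightarrow> is_pmor q r \<psi> \<Longrightarrow> is_pmor p r (mcomp p r \<psi> \<phi>)"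
  by (rule is_pmorI) (auto simp: mcomp_def pmor_pos pmor_dir)

lemma mcomp_fst[simp]: "I \<in> pos p \<Longrightarrow> fst (mcomp p r \<psi> \<phi>) I = fst \<psi> (fst \<phi> I)"
  by (simp add: mcomp_def)
lemma mcomp_snd[simp]: "I \<in> pos p \<Longrightarrow> d \<in> dir r (fst \<psi> (fst \<phi> I)) \<Longrightarrow>
   snd (mcomp p r \<psi> \<phi>) I d = snd \<phi> I (snd \<psi> (fst \<phi> I) d)"
  by (simp add: mcomp_def)

lemma pid_pmor: "is_pmor p p (pid p)"
  by (rule is_pmorI) (auto simp: pid_def)
lemma pid_fst[simp]: "I \<in> pos p \<Longrightarrow> fst (pid p) I = I" by (simp add: pid_def)
lemma pid_snd[simp]: "I \<in> pos p \<Longrightarrow> d \<in> dir p I \<Longrightarrow> snd (pid p) I d = d" by (simp add: pid_def)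

lemma mcomp_assoc:
  assumes "is_pmor p q \<phi>" "is_pmor q r \<psi>" "is_pmor r s \<chi>"
  shows "mcomp p s \<chi> (mcomp p r \<psi> \<phi>) = mcomp p s (mcomp q s \<chi> \<psi>) \<phi>"
  by (rule pmor_eqI) (auto intro: mcomp_pmor assms simp: pmor_pos[OF assms(1)] pmor_pos[OF assms(2)] pmor_dir[OF assms(3)] pmor_dir[OF assms(2)])

lemma mcomp_pid_left: "is_pmor p q \<phi> \<Longrightarrow> mcomp p q (pid q) \<phi> = \<phi>"
  by (rule pmor_eqI) (auto intro: mcomp_pmor pid_pmor simp: pmor_pos)
lemma mcomp_pid_right: "is_pmor p q \<phi> \<Longrightarrow> mcomp p q \<phi> (pid p) = \<phi>"
  by (rule pmor_eqI) (auto intro: mcomp_pmor pid_pmor simp: pmor_pos pmor_dir)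

lemma tri_mor_pmor: "is_pmor p p' \<phi> \<Longrightarrow> is_pmor q q' \<psi> \<Longrightarrow>
   is_pmor (tri p q) (tri p' q') (tri_mor p q p' q' \<phi> \<psi>)"
  by (rule is_pmorI) (auto simp: tri_mor_def pmor_pos pmor_dir PiE_iff extensional_def)

lemma tri_mor_fst[simp]: "I \<in> pos p \<Longrightarrow> f \<in> dir p I \<rightarrow>\<^sub>E pos q \<Longrightarrow>
   fst (tri_mor p q p' q' \<phi> \<psi>) (I, f) = (fst \<phi> I, \<lambda>d'\<in>dir p' (fst \<phi> I). fst \<psi> (f (snd \<phi> I d')))"
  by (simp add: tri_mor_def)
lemma tri_mor_snd[simp]: "I \<in> pos p \<Longrightarrow> f \<in> dir p I \<rightarrow>\<^sub>E pos q \<Longrightarrow> d' \<in> dir p' (fst \<phi> I) \<Longrightarrow>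
   e' \<in> dir q' (fst \<psi> (f (snd \<phi> I d'))) \<Longrightarrow>
   snd (tri_mor p q p' q' \<phi> \<psi>) (I, f) (d', e') = (snd \<phi> I d', snd \<psi> (f (snd \<phi> I d')) e')"
  by (simp add: tri_mor_def)

lemma tri_mor_pid: "tri_mor p q p q (pid p) (pid q) = pid (tri p q)"
  by (rule pmor_eqI) (auto intro: tri_mor_pmor pid_pmor simp: PiE_iff extensional_def fun_eq_iff)

lemma tri_mor_comp:
  assumes "is_pmor p p' \<phi>" "is_pmor p' p'' \<phi>'" "is_pmor q q' \<psi>" "is_pmor q' q'' \<psi>'"
  shows "mcomp (tri p q) (tri p'' q'') (tri_mor p' q' p'' q'' \<phi>' \<psi>') (tri_mor p q p' q' \<phi> \<psi>)
     = tri_mor p q p'' q'' (mcomp p p'' \<phi>' \<phi>) (mcomp q q'' \<psi>' \<psi>)"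
proof (rule pmor_eqI)
  show "is_pmor (tri p q) (tri p'' q'') (mcomp (tri p q) (tri p'' q'') (tri_mor p' q' p'' q'' \<phi>' \<psi>') (tri_mor p q p' q' \<phi> \<psi>))"
    by (rule mcomp_pmor[OF tri_mor_pmor tri_mor_pmor]) (fact assms)+
  show "is_pmor (tri p q) (tri p'' q'') (tri_mor p q p'' q'' (mcomp p p'' \<phi>' \<phi>) (mcomp q q'' \<psi>' \<psi>))"
    by (rule tri_mor_pmor[OF mcomp_pmor mcomp_pmor]) (fact assms)+
  fix z assume z: "z \<in> pos (tri p q)"
  then obtain I f where zz: "z = (I, f)" "I \<in> pos p" "f \<in> dir p I \<rightarrow>\<^sub>E pos q" by auto
  have f1: "d \<in> dir p I \<Longrightarrow> f d \<in> pos q" for d using zz by auto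
  have m: "(\<lambda>d'\<in>dir p' (fst \<phi> I). fst \<psi> (f (snd \<phi> I d'))) \<in> dir p' (fst \<phi> I) \<rightarrow>\<^sub>E pos q'"
    using zz by (auto intro!: pmor_pos[OF assms(3)] f1 pmor_dir[OF assms(1)])
  show "fst (mcomp (tri p q) (tri p'' q'') (tri_mor p' q' p'' q'' \<phi>' \<psi>') (tri_mor p q p' q' \<phi> \<psi>)) z =
        fst (tri_mor p q p'' q'' (mcomp p p'' \<phi>' \<phi>) (mcomp q q'' \<psi>' \<psi>)) z"
    using zz m by (auto simp: pmor_pos[OF assms(1)] pmor_dir[OF assms(1)] pmor_dir[OF assms(2)] f1 fun_eq_iff)
  fix w assume w: "w \<in> dir (tri p'' q'') (fst (mcomp (tri p q) (tri p'' q'') (tri_mor p' q' p'' q'' \<phi>' \<psi>') (tri_mor p q p' q' \<phi> \<psi>)) z)"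
  show "snd (mcomp (tri p q) (tri p'' q'') (tri_mor p' q' p'' q'' \<phi>' \<psi>') (tri_mor p q p' q' \<phi> \<psi>)) z w =
        snd (tri_mor p q p'' q'' (mcomp p p'' \<phi>' \<phi>) (mcomp q q'' \<psi>' \<psi>)) z w"
    using zz m w by (auto simp: pmor_pos[OF assms(1)] pmor_dir[OF assms(1)] pmor_dir[OF assms(2)] f1 pmor_dir[OF assms(3)] pmor_pos[OF assms(3)] pmor_dir[OF assms(4)])
qed


lemma ihom_post_fst[simp]: "is_pmor q p \<chi> \<Longrightarrow> fst (ihom_post q p p' \<phi>) \<chi> = mcomp q p' \<phi> \<chi>"
  by (simp add: ihom_post_def)
lemma ihom_post_snd[simp]: "is_pmor q p \<chi> \<Longrightarrow> J \<in> pos q \<Longrightarrow> d \<in> dir p' (fst (mcomp q p' \<phi> \<chi>) J) \<Longrightarrow>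
   snd (ihom_post q p p' \<phi>) \<chi> (J, d) = (J, snd \<phi> (fst \<chi> J) d)"
  by (simp add: ihom_post_def)
lemma ihom_pre_fst[simp]: "is_pmor q' p \<chi> \<Longrightarrow> fst (ihom_pre q q' p \<psi>) \<chi> = mcomp q p \<chi> \<psi>"
  by (simp add: ihom_pre_def)
lemma ihom_pre_snd[simp]: "is_pmor q' p \<chi> \<Longrightarrow> J \<in> pos q \<Longrightarrow> d \<in> dir p (fst (mcomp q p \<chi> \<psi>) J) \<Longrightarrow>
   snd (ihom_pre q q' p \<psi>) \<chi> (J, d) = (fst \<psi> J, d)"
  by (simp add: ihom_pre_def)
lemma cmor_fst[simp]: "x \<in> S \<Longrightarrow> fst (cmor S f) x = f x" by (simp add: cmor_def)
lemma linmap_fst[simp]: "x \<in> S \<Longrightarrow> fst (linmap S f) x = f x" by (simp add: linmap_def)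
lemma linmap_snd[simp]: "x \<in> S \<Longrightarrow> snd (linmap S f) x u = ()" by (simp add: linmap_def)

lemma org_lhs:
  assumes c: "is_coalg p q S \<theta>" and x: "x \<in> S" and ph: "is_pmor p p' \<phi>" and f: "f \<in> S \<rightarrow>\<^sub>E S'"
  shows "fst (tri_mor (ihom q p') (cpoly S) (ihom q p') (cpoly S') (pid (ihom q p')) (cmor S f))
          (fst (tri_mor (ihom q p) (cpoly S) (ihom q p') (cpoly S) (ihom_post q p p' \<phi>) (pid (cpoly S)))
             (\<theta> x))
   = (mcomp q p' \<phi> (fst (\<theta> x)),
      \<lambda>(J, d')\<in>Sigma (pos q) (\<lambda>J. dir p' (fst \<phi> (fst (fst (\<theta> x)) J))).
        f (snd (\<theta> x) (J, snd \<phi> (fst (fst (\<theta> x)) J) d')))"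
proof -
  note D = coalgD[OF c x]
  obtain \<chi> k where e: "\<theta> x = (\<chi>, k)" by (cases "\<theta> x")
  have chi: "is_pmor q p \<chi>" using D e by simp
  have k: "J \<in> pos q \<Longrightarrow> d \<in> dir p (fst \<chi> J) \<Longrightarrow> k (J, d) \<in> S" for J d using D e by auto
  have kk: "k \<in> Sigma (pos q) (\<lambda>J. dir p (fst \<chi> J)) \<rightarrow>\<^sub>E S" using D e by (auto simp: PiE_iff extensional_def)
  have m: "mcomp q p' \<phi> \<chi> \<in> pos (ihom q p')" using mcomp_pmor[OF chi ph] by simp
  define k' where "k' = (\<lambda>(J, d')\<in>Sigma (pos q) (\<lambda>J. dir p' (fst \<phi> (fst \<chi> J))). k (J, snd \<phi> (fst \<chi> J) d'))"
  have dm: "dir (ihom q p') (mcomp q p' \<phi> \<chi>) = Sigma (pos q) (\<lambda>J. dir p' (fst \<phi> (fst \<chi> J)))"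
    by (simp, rule Sigma_cong) auto
  have k'm: "k' \<in> dir (ihom q p') (mcomp q p' \<phi> \<chi>) \<rightarrow>\<^sub>E S"
    unfolding dm by (auto simp: k'_def pmor_pos[OF chi] pmor_dir[OF ph] k)
  have 1: "fst (tri_mor (ihom q p) (cpoly S) (ihom q p') (cpoly S) (ihom_post q p p' \<phi>) (pid (cpoly S))) (\<chi>, k)
     = (mcomp q p' \<phi> \<chi>, k')"
    using chi kk by (auto simp: k'_def fun_eq_iff pmor_pos[OF chi] pmor_dir[OF ph] k)
  have 2: "fst (tri_mor (ihom q p') (cpoly S) (ihom q p') (cpoly S') (pid (ihom q p')) (cmor S f)) (mcomp q p' \<phi> \<chi>, k')
     = (mcomp q p' \<phi> \<chi>, \<lambda>(J, d')\<in>Sigma (pos q) (\<lambda>J. dir p' (fst \<phi> (fst \<chi> J))). f (k (J, snd \<phi> (fst \<chi> J) d')))"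
    using m k'm by (auto simp: k'_def fun_eq_iff pmor_pos[OF chi] pmor_dir[OF ph] k)
  show ?thesis unfolding e using 1 2 by simp
qed

lemma org_rhs:
  assumes c: "is_coalg p' q' S' \<theta>'" and y: "y \<in> S'" and ps: "is_pmor q q' \<psi>"
  shows "fst (tri_mor (ihom q' p') (cpoly S') (ihom q p') (cpoly S') (ihom_pre q q' p' \<psi>) (pid (cpoly S')))
          (\<theta>' y)
   = (mcomp q p' (fst (\<theta>' y)) \<psi>,
      \<lambda>(J, d)\<in>Sigma (pos q) (\<lambda>J. dir p' (fst (fst (\<theta>' y)) (fst \<psi> J))). snd (\<theta>' y) (fst \<psi> J, d))"
proof -
  note D = coalgD[OF c y]
  obtain \<chi> k where e: "\<theta>' y = (\<chi>, k)" by (cases "\<theta>' y")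
  have chi: "is_pmor q' p' \<chi>" using D e by simp
  have k: "J \<in> pos q' \<Longrightarrow> d \<in> dir p' (fst \<chi> J) \<Longrightarrow> k (J, d) \<in> S'" for J d using D e by auto
  have kk: "k \<in> Sigma (pos q') (\<lambda>J. dir p' (fst \<chi> J)) \<rightarrow>\<^sub>E S'" using D e by (auto simp: PiE_iff extensional_def)
  have dm: "dir (ihom q p') (mcomp q p' \<chi> \<psi>) = Sigma (pos q) (\<lambda>J. dir p' (fst \<chi> (fst \<psi> J)))"
    by (simp, rule Sigma_cong) auto
  show ?thesis unfolding e using chi kk
    by (auto simp: fun_eq_iff dm pmor_pos[OF ps] k)
qed

lemma Phi_fst: "x \<in> S \<Longrightarrow> g () \<in> pos q \<Longrightarrow> fst (Phi p q S \<theta>) (x, g) =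
   (fst (fst (\<theta> x)) (g ()), \<lambda>d\<in>dir p (fst (fst (\<theta> x)) (g ())). snd (\<theta> x) (g (), d))"
  by (simp add: Phi_def)
lemma Phi_snd: "x \<in> S \<Longrightarrow> g () \<in> pos q \<Longrightarrow> d \<in> dir p (fst (fst (\<theta> x)) (g ())) \<Longrightarrow>
   snd (Phi p q S \<theta>) (x, g) (d, u) = ((), snd (fst (\<theta> x)) (g ()) d)"
  by (simp add: Phi_def)

lemma eff_lhs:
  assumes c: "is_coalg p q S \<theta>" and x: "x \<in> S" and g: "g () \<in> pos q" and ph: "is_pmor p p' \<phi>"
    and f: "f \<in> S \<rightarrow>\<^sub>E S'"
  shows "fst (mcomp (tri (lin S) q) (tri p' (lin S')) (tri_mor p (lin S) p' (lin S') \<phi> (linmap S f)) (Phi p q S \<theta>)) (x, g)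
     = (fst \<phi> (fst (fst (\<theta> x)) (g ())),
        \<lambda>d'\<in>dir p' (fst \<phi> (fst (fst (\<theta> x)) (g ()))). f (snd (\<theta> x) (g (), snd \<phi> (fst (fst (\<theta> x)) (g ())) d')))"
   "d' \<in> dir p' (fst \<phi> (fst (fst (\<theta> x)) (g ()))) \<Longrightarrow>
    snd (mcomp (tri (lin S) q) (tri p' (lin S')) (tri_mor p (lin S) p' (lin S') \<phi> (linmap S f)) (Phi p q S \<theta>)) (x, g) (d', u)
     = ((), snd (fst (\<theta> x)) (g ()) (snd \<phi> (fst (fst (\<theta> x)) (g ())) d'))"
proof -
  note D = coalgD[OF c x]
  have I: "fst (fst (\<theta> x)) (g ()) \<in> pos p" using pmor_pos[OF D(1) g] .
  have m: "(\<lambda>d\<in>dir p (fst (fst (\<theta> x)) (g ())). snd (\<theta> x) (g (), d)) \<in> dir p (fst (fst (\<theta> x)) (g ())) \<rightarrow>\<^sub>E S"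
    using D g by auto
  show "fst (mcomp (tri (lin S) q) (tri p' (lin S')) (tri_mor p (lin S) p' (lin S') \<phi> (linmap S f)) (Phi p q S \<theta>)) (x, g)
     = (fst \<phi> (fst (fst (\<theta> x)) (g ())),
        \<lambda>d'\<in>dir p' (fst \<phi> (fst (fst (\<theta> x)) (g ()))). f (snd (\<theta> x) (g (), snd \<phi> (fst (fst (\<theta> x)) (g ())) d')))"
    using x g m I by (auto simp: Phi_fst fun_eq_iff pmor_dir[OF ph] D(2))
  assume d': "d' \<in> dir p' (fst \<phi> (fst (fst (\<theta> x)) (g ())))"
  show "snd (mcomp (tri (lin S) q) (tri p' (lin S')) (tri_mor p (lin S) p' (lin S') \<phi> (linmap S f)) (Phi p q S \<theta>)) (x, g) (d', u)
     = ((), snd (fst (\<theta> x)) (g ()) (snd \<phi> (fst (fst (\<theta> x)) (g ())) d'))"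
    using x g m I d' by (auto simp: Phi_fst Phi_snd pmor_dir[OF ph] D(2))
qed

lemma eff_rhs:
  assumes c: "is_coalg p' q' S' \<theta>'" and x: "x \<in> S" and g: "g () \<in> pos q" and ps: "is_pmor q q' \<psi>"
    and f: "f \<in> S \<rightarrow>\<^sub>E S'"
  shows "fst (mcomp (tri (lin S) q) (tri p' (lin S')) (Phi p' q' S' \<theta>') (tri_mor (lin S) q (lin S') q' (linmap S f) \<psi>)) (x, g)
     = (fst (fst (\<theta>' (f x))) (fst \<psi> (g ())),
        \<lambda>d\<in>dir p' (fst (fst (\<theta>' (f x))) (fst \<psi> (g ()))). snd (\<theta>' (f x)) (fst \<psi> (g ()), d))"
   "d' \<in> dir p' (fst (fst (\<theta>' (f x))) (fst \<psi> (g ()))) \<Longrightarrow>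
    snd (mcomp (tri (lin S) q) (tri p' (lin S')) (Phi p' q' S' \<theta>') (tri_mor (lin S) q (lin S') q' (linmap S f) \<psi>)) (x, g) (d', u)
     = ((), snd \<psi> (g ()) (snd (fst (\<theta>' (f x))) (fst \<psi> (g ())) d'))"
proof -
  have fx: "f x \<in> S'" using f x by auto
  note D = coalgD[OF c fx]
  have J: "fst \<psi> (g ()) \<in> pos q'" using pmor_pos[OF ps g] .
  show "fst (mcomp (tri (lin S) q) (tri p' (lin S')) (Phi p' q' S' \<theta>') (tri_mor (lin S) q (lin S') q' (linmap S f) \<psi>)) (x, g)
     = (fst (fst (\<theta>' (f x))) (fst \<psi> (g ())),
        \<lambda>d\<in>dir p' (fst (fst (\<theta>' (f x))) (fst \<psi> (g ()))). snd (\<theta>' (f x)) (fst \<psi> (g ()), d))"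
    using x g fx J by (simp add: Phi_fst)
  assume d': "d' \<in> dir p' (fst (fst (\<theta>' (f x))) (fst \<psi> (g ())))"
  show "snd (mcomp (tri (lin S) q) (tri p' (lin S')) (Phi p' q' S' \<theta>') (tri_mor (lin S) q (lin S') q' (linmap S f) \<psi>)) (x, g) (d', u)
     = ((), snd \<psi> (g ()) (snd (fst (\<theta>' (f x))) (fst \<psi> (g ())) d'))"
    using x g fx J d' by (simp add: Phi_fst Phi_snd pmor_dir[OF D(1)])
qed

lemma pmor_eq_iff:
  assumes "is_pmor p q \<phi>" "is_pmor p q \<phi>'"
  shows "\<phi> = \<phi>' \<longleftrightarrow> (\<forall>I\<in>pos p. fst \<phi> I = fst \<phi>' I \<and> (\<forall>d\<in>dir q (fst \<phi> I). snd \<phi> I d = snd \<phi>' I d))"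
  using pmor_eqI[OF assms] by auto

lemma pair_restrict_eq:
  "((a, restrict F (D a)) = (b, restrict G (D b))) \<longleftrightarrow> (a = b \<and> (\<forall>d\<in>D a. F d = G d))"
  by (auto simp: fun_eq_iff)

lemma restrict_eq_iff: "(restrict F A = restrict G A) \<longleftrightarrow> (\<forall>x\<in>A. F x = G x)"
  by (auto simp: fun_eq_iff)

lemma linmap_pmor: "f \<in> S \<rightarrow> S' \<Longrightarrow> is_pmor (lin S) (lin S') (linmap S f)"
  by (rule is_pmorI) (auto simp: linmap_def)

lemma Phi_pmor: "is_coalg p q S \<theta> \<Longrightarrow> is_pmor (tri (lin S) q) (tri p (lin S)) (Phi p q S \<theta>)"
  using Phi_handler by (simp add: is_handler_def)

lemma sq_equiv:
  assumes c: "is_coalg p q S \<theta>" and c': "is_coalg p' q' S' \<theta>'" and ps: "is_pmor q q' \<psi>"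
    and ph: "is_pmor p p' \<phi>" and f: "f \<in> S \<rightarrow>\<^sub>E S'"
  shows "org_sq p q S \<theta> p' q' S' \<theta>' \<psi> \<phi> f \<longleftrightarrow>
         eff_sq p q (lin S) (Phi p q S \<theta>) p' q' (lin S') (Phi p' q' S' \<theta>') \<psi> \<phi> (linmap S f)"
proof -
  define C where "C x J \<longleftrightarrow> fst \<phi> (fst (fst (\<theta> x)) J) = fst (fst (\<theta>' (f x))) (fst \<psi> J) \<and>
     (\<forall>d\<in>dir p' (fst \<phi> (fst (fst (\<theta> x)) J)).
        f (snd (\<theta> x) (J, snd \<phi> (fst (fst (\<theta> x)) J) d)) = snd (\<theta>' (f x)) (fst \<psi> J, d) \<and>
        snd (fst (\<theta> x)) J (snd \<phi> (fst (fst (\<theta> x)) J) d) = snd \<psi> J (snd (fst (\<theta>' (f x))) (fst \<psi> J) d))"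
    for x J
  have fS: "f \<in> S \<rightarrow> S'" using f by auto
  have org: "(fst (tri_mor (ihom q p') (cpoly S) (ihom q p') (cpoly S') (pid (ihom q p')) (cmor S f))
          (fst (tri_mor (ihom q p) (cpoly S) (ihom q p') (cpoly S) (ihom_post q p p' \<phi>) (pid (cpoly S)))
             (\<theta> x))
        =
        fst (tri_mor (ihom q' p') (cpoly S') (ihom q p') (cpoly S') (ihom_pre q q' p' \<psi>) (pid (cpoly S')))
          (\<theta>' (f x))) \<longleftrightarrow> (\<forall>J\<in>pos q. C x J)" if x: "x \<in> S" for x
  proof -
    have fx: "f x \<in> S'" using f x by auto
    note D = coalgD[OF c x] and D' = coalgD[OF c' fx]
    have M: "mcomp q p' \<phi> (fst (\<theta> x)) = mcomp q p' (fst (\<theta>' (f x))) \<psi> \<longleftrightarrow>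
      (\<forall>J\<in>pos q. fst \<phi> (fst (fst (\<theta> x)) J) = fst (fst (\<theta>' (f x))) (fst \<psi> J) \<and>
         (\<forall>d\<in>dir p' (fst \<phi> (fst (fst (\<theta> x)) J)).
            snd (fst (\<theta> x)) J (snd \<phi> (fst (fst (\<theta> x)) J) d) = snd \<psi> J (snd (fst (\<theta>' (f x))) (fst \<psi> J) d)))"
      by (subst pmor_eq_iff[OF mcomp_pmor[OF D(1) ph] mcomp_pmor[OF ps D'(1)]]) (rule ball_cong[OF refl], auto)
    have R: "((\<lambda>(J, d')\<in>Sigma (pos q) (\<lambda>J. dir p' (fst \<phi> (fst (fst (\<theta> x)) J))).
        f (snd (\<theta> x) (J, snd \<phi> (fst (fst (\<theta> x)) J) d'))) =
       (\<lambda>(J, d)\<in>Sigma (pos q) (\<lambda>J. dir p' (fst (fst (\<theta>' (f x))) (fst \<psi> J))). snd (\<theta>' (f x)) (fst \<psi> J, d)))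
      \<longleftrightarrow> (\<forall>J\<in>pos q. \<forall>d\<in>dir p' (fst \<phi> (fst (fst (\<theta> x)) J)).
             f (snd (\<theta> x) (J, snd \<phi> (fst (fst (\<theta> x)) J) d)) = snd (\<theta>' (f x)) (fst \<psi> J, d))"
      if A: "\<forall>J\<in>pos q. fst \<phi> (fst (fst (\<theta> x)) J) = fst (fst (\<theta>' (f x))) (fst \<psi> J)"
    proof -
      have "Sigma (pos q) (\<lambda>J. dir p' (fst (fst (\<theta>' (f x))) (fst \<psi> J))) = Sigma (pos q) (\<lambda>J. dir p' (fst \<phi> (fst (fst (\<theta> x)) J)))"
        using A by (intro Sigma_cong) auto
      then show ?thesis by (simp add: restrict_eq_iff)
    qed
    show ?thesis
      unfolding org_lhs[OF c x ph f] org_rhs[OF c' fx ps] prod.inject M C_def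
      using R by blast
  qed
  have L: "is_pmor (tri (lin S) q) (tri p' (lin S')) (mcomp (tri (lin S) q) (tri p' (lin S')) (tri_mor p (lin S) p' (lin S') \<phi> (linmap S f)) (Phi p q S \<theta>))"
    by (rule mcomp_pmor[OF Phi_pmor[OF c] tri_mor_pmor[OF ph linmap_pmor[OF fS]]])
  have Rp: "is_pmor (tri (lin S) q) (tri p' (lin S')) (mcomp (tri (lin S) q) (tri p' (lin S')) (Phi p' q' S' \<theta>') (tri_mor (lin S) q (lin S') q' (linmap S f) \<psi>))"
    by (rule mcomp_pmor[OF tri_mor_pmor[OF linmap_pmor[OF fS] ps] Phi_pmor[OF c']])
  have eff: "(fst (mcomp (tri (lin S) q) (tri p' (lin S')) (tri_mor p (lin S) p' (lin S') \<phi> (linmap S f)) (Phi p q S \<theta>)) (x, g)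
      = fst (mcomp (tri (lin S) q) (tri p' (lin S')) (Phi p' q' S' \<theta>') (tri_mor (lin S) q (lin S') q' (linmap S f) \<psi>)) (x, g) \<and>
     (\<forall>w\<in>dir (tri p' (lin S')) (fst (mcomp (tri (lin S) q) (tri p' (lin S')) (tri_mor p (lin S) p' (lin S') \<phi> (linmap S f)) (Phi p q S \<theta>)) (x, g)).
        snd (mcomp (tri (lin S) q) (tri p' (lin S')) (tri_mor p (lin S) p' (lin S') \<phi> (linmap S f)) (Phi p q S \<theta>)) (x, g) w
      = snd (mcomp (tri (lin S) q) (tri p' (lin S')) (Phi p' q' S' \<theta>') (tri_mor (lin S) q (lin S') q' (linmap S f) \<psi>)) (x, g) w))
    \<longleftrightarrow> C x (g ())" if x: "x \<in> S" and g: "g () \<in> pos q" for x g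
  proof -
    note E1 = eff_lhs[where g=g, OF c x g ph f] and E2 = eff_rhs[where g=g, OF c' x g ps f]
    show ?thesis
      unfolding E1(1) E2(1) pair_restrict_eq C_def
      using E1(2) E2(2) by (auto simp: prod_eq_iff)
  qed
  show ?thesis
  proof
    assume o: "org_sq p q S \<theta> p' q' S' \<theta>' \<psi> \<phi> f"
    have CC: "\<forall>x\<in>S. \<forall>J\<in>pos q. C x J" using o org by (auto simp: org_sq_def)
    show "eff_sq p q (lin S) (Phi p q S \<theta>) p' q' (lin S') (Phi p' q' S' \<theta>') \<psi> \<phi> (linmap S f)"
      unfolding eff_sq_def
    proof (intro conjI linmap_pmor[OF fS])
      show "mcomp (tri (lin S) q) (tri p' (lin S')) (tri_mor p (lin S) p' (lin S') \<phi> (linmap S f)) (Phi p q S \<theta>) =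
            mcomp (tri (lin S) q) (tri p' (lin S')) (Phi p' q' S' \<theta>') (tri_mor (lin S) q (lin S') q' (linmap S f) \<psi>)"
        unfolding pmor_eq_iff[OF L Rp]
      proof
        fix z assume z: "z \<in> pos (tri (lin S) q)"
        then obtain x g where zz: "z = (x, g)" "x \<in> S" "g () \<in> pos q" by auto
        show "fst (mcomp (tri (lin S) q) (tri p' (lin S')) (tri_mor p (lin S) p' (lin S') \<phi> (linmap S f)) (Phi p q S \<theta>)) z
      = fst (mcomp (tri (lin S) q) (tri p' (lin S')) (Phi p' q' S' \<theta>') (tri_mor (lin S) q (lin S') q' (linmap S f) \<psi>)) z \<and>
     (\<forall>w\<in>dir (tri p' (lin S')) (fst (mcomp (tri (lin S) q) (tri p' (lin S')) (tri_mor p (lin S) p' (lin S') \<phi> (linmap S f)) (Phi p q S \<theta>)) z).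
        snd (mcomp (tri (lin S) q) (tri p' (lin S')) (tri_mor p (lin S) p' (lin S') \<phi> (linmap S f)) (Phi p q S \<theta>)) z w
      = snd (mcomp (tri (lin S) q) (tri p' (lin S')) (Phi p' q' S' \<theta>') (tri_mor (lin S) q (lin S') q' (linmap S f) \<psi>)) z w)"
          unfolding zz(1) eff[where g=g, OF zz(2,3)] using CC zz by blast
      qed
    qed
  next
    assume e: "eff_sq p q (lin S) (Phi p q S \<theta>) p' q' (lin S') (Phi p' q' S' \<theta>') \<psi> \<phi> (linmap S f)"
    have CC: "C x J" if x: "x \<in> S" and J: "J \<in> pos q" for x J
    proof -
      have z: "(x, \<lambda>u. J) \<in> pos (tri (lin S) q)" using x J by simp
      from e have "mcomp (tri (lin S) q) (tri p' (lin S')) (tri_mor p (lin S) p' (lin S') \<phi> (linmap S f)) (Phi p q S \<theta>) =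
            mcomp (tri (lin S) q) (tri p' (lin S')) (Phi p' q' S' \<theta>') (tri_mor (lin S) q (lin S') q' (linmap S f) \<psi>)"
        by (simp add: eff_sq_def)
      then have "fst (mcomp (tri (lin S) q) (tri p' (lin S')) (tri_mor p (lin S) p' (lin S') \<phi> (linmap S f)) (Phi p q S \<theta>)) (x, \<lambda>u. J)
      = fst (mcomp (tri (lin S) q) (tri p' (lin S')) (Phi p' q' S' \<theta>') (tri_mor (lin S) q (lin S') q' (linmap S f) \<psi>)) (x, \<lambda>u. J) \<and>
     (\<forall>w\<in>dir (tri p' (lin S')) (fst (mcomp (tri (lin S) q) (tri p' (lin S')) (tri_mor p (lin S) p' (lin S') \<phi> (linmap S f)) (Phi p q S \<theta>)) (x, \<lambda>u. J)).
        snd (mcomp (tri (lin S) q) (tri p' (lin S')) (tri_mor p (lin S) p' (lin S') \<phi> (linmap S f)) (Phi p q S \<theta>)) (x, \<lambda>u. J) w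
      = snd (mcomp (tri (lin S) q) (tri p' (lin S')) (Phi p' q' S' \<theta>') (tri_mor (lin S) q (lin S') q' (linmap S f) \<psi>)) (x, \<lambda>u. J) w)"
        using z by simp
      then show ?thesis using eff[OF x, of "\<lambda>u. J"] J by simp
    qed
    show "org_sq p q S \<theta> p' q' S' \<theta>' \<psi> \<phi> f"
      unfolding org_sq_def using f org CC by blast
  qed
qed


lemma part1: "bij_betw (Phi p q S) {\<theta>. is_coalg p q S \<theta>} {\<eta>. is_handler p q (lin S) \<eta>}"
  by (rule bij_betw_byWitness[where f'="Psi p q S"])
     (auto simp: Psi_Phi Phi_Psi Phi_handler Psi_coalg)

lemma lin_pmor_linmap: "is_pmor (lin S) (lin S') \<gamma> \<Longrightarrow> \<gamma> = linmap S (fst \<gamma>) \<and> fst \<gamma> \<in> S \<rightarrow>\<^sub>E S'"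
proof -
  assume g: "is_pmor (lin S) (lin S') \<gamma>"
  have f: "fst \<gamma> \<in> S \<rightarrow>\<^sub>E S'" using g by (auto simp: is_pmor_def)
  have "\<gamma> = linmap S (fst \<gamma>)"
    by (rule pmor_eqI[OF g linmap_pmor]) (use f in auto)
  then show ?thesis using f by simp
qed

lemma part2:
  assumes "is_coalg p q S \<theta>" "is_coalg p' q' S' \<theta>'" "is_pmor q q' \<psi>" "is_pmor p p' \<phi>"
  shows "bij_betw (linmap S) {f. org_sq p q S \<theta> p' q' S' \<theta>' \<psi> \<phi> f}
        {\<gamma>. eff_sq p q (lin S) (Phi p q S \<theta>) p' q' (lin S') (Phi p' q' S' \<theta>') \<psi> \<phi> \<gamma>}"
  unfolding bij_betw_def
proof
  show "inj_on (linmap S) {f. org_sq p q S \<theta> p' q' S' \<theta>' \<psi> \<phi> f}"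
  proof (rule inj_onI)
    fix f g assume f: "f \<in> {f. org_sq p q S \<theta> p' q' S' \<theta>' \<psi> \<phi> f}" and g: "g \<in> {f. org_sq p q S \<theta> p' q' S' \<theta>' \<psi> \<phi> f}"
      and e: "linmap S f = linmap S g"
    have "restrict f S = restrict g S" using e by (simp add: linmap_def)
    moreover have "f \<in> extensional S" "g \<in> extensional S" using f g by (auto simp: org_sq_def PiE_def)
    ultimately show "f = g" by (metis extensional_restrict)
  qed
  show "linmap S ` {f. org_sq p q S \<theta> p' q' S' \<theta>' \<psi> \<phi> f} =
        {\<gamma>. eff_sq p q (lin S) (Phi p q S \<theta>) p' q' (lin S') (Phi p' q' S' \<theta>') \<psi> \<phi> \<gamma>}"
  proof (intro equalityI subsetI)
    fix \<gamma> assume "\<gamma> \<in> linmap S ` {f. org_sq p q S \<theta> p' q' S' \<theta>' \<psi> \<phi> f}"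
    then obtain f where f: "org_sq p q S \<theta> p' q' S' \<theta>' \<psi> \<phi> f" "\<gamma> = linmap S f" by auto
    have "f \<in> S \<rightarrow>\<^sub>E S'" using f by (simp add: org_sq_def)
    then show "\<gamma> \<in> {\<gamma>. eff_sq p q (lin S) (Phi p q S \<theta>) p' q' (lin S') (Phi p' q' S' \<theta>') \<psi> \<phi> \<gamma>}"
      using sq_equiv[OF assms] f by simp
  next
    fix \<gamma> assume "\<gamma> \<in> {\<gamma>. eff_sq p q (lin S) (Phi p q S \<theta>) p' q' (lin S') (Phi p' q' S' \<theta>') \<psi> \<phi> \<gamma>}"
    then have e: "eff_sq p q (lin S) (Phi p q S \<theta>) p' q' (lin S') (Phi p' q' S' \<theta>') \<psi> \<phi> \<gamma>" by simp
    then have "is_pmor (lin S) (lin S') \<gamma>" by (simp add: eff_sq_def)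
    from lin_pmor_linmap[OF this] have g: "\<gamma> = linmap S (fst \<gamma>)" "fst \<gamma> \<in> S \<rightarrow>\<^sub>E S'" by auto
    have "org_sq p q S \<theta> p' q' S' \<theta>' \<psi> \<phi> (fst \<gamma>)" using sq_equiv[OF assms g(2)] e g(1) by simp
    then show "\<gamma> \<in> linmap S ` {f. org_sq p q S \<theta> p' q' S' \<theta>' \<psi> \<phi> f}" using g(1) by blast
  qed
qed

lemma part3a: "f \<in> S \<rightarrow>\<^sub>E S' \<Longrightarrow> mcomp (lin S) (lin S'') (linmap S' g) (linmap S f) = linmap S (\<lambda>x. g (f x))"
  by (auto simp: mcomp_def linmap_def fun_eq_iff PiE_iff)

lemma part3b: "linmap S (\<lambda>x. x) = pid (lin S)"
  by (auto simp: linmap_def pid_def fun_eq_iff)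

lemma part4: "Phi p p {()} (org_id p) = eff_id p"
  by (auto simp: Phi_def org_id_def eff_id_def fun_eq_iff pid_pmor)


lemma comp_iso_pmor: "is_pmor (tri (lin T) (lin S)) (lin (T \<times> S)) (comp_iso T S)"
  by (rule is_pmorI) (auto simp: comp_iso_def)
lemma comp_iso_fst[simp]: "t \<in> T \<Longrightarrow> g () \<in> S \<Longrightarrow> fst (comp_iso T S) (t, g) = (t, g ())"
  by (simp add: comp_iso_def)
lemma comp_iso_snd[simp]: "t \<in> T \<Longrightarrow> g () \<in> S \<Longrightarrow> snd (comp_iso T S) (t, g) u = ((), ())"
  by (simp add: comp_iso_def)

lemma part6: "f \<in> T \<rightarrow>\<^sub>E T' \<Longrightarrow> g \<in> S \<rightarrow>\<^sub>E S' \<Longrightarrow>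
      mcomp (tri (lin T) (lin S)) (lin (T' \<times> S')) (comp_iso T' S')
        (tri_mor (lin T) (lin S) (lin T') (lin S') (linmap T f) (linmap S g))
      = mcomp (tri (lin T) (lin S)) (lin (T' \<times> S'))
          (linmap (T \<times> S) (\<lambda>(t, s). (f t, g s))) (comp_iso T S)"
  apply (rule pmor_eqI)
     apply (rule mcomp_pmor[OF tri_mor_pmor comp_iso_pmor]; rule linmap_pmor; force)
    apply (rule mcomp_pmor[OF comp_iso_pmor linmap_pmor]; force)
   apply (auto simp: PiE_iff)
  done

lemma lunit_pmor: "is_pmor (tri (lin {()}) a) a (lunit a)"
  by (rule is_pmorI) (auto simp: lunit_def)
lemma runit_pmor: "is_pmor (tri a (lin {()})) a (runit a)"
  by (rule is_pmorI) (auto simp: runit_def)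

lemma part8a: "mcomp (tri (lin {()}) (lin T)) (lin T) (linmap ({()} \<times> T) snd) (comp_iso {()} T) = lunit (lin T)"
  apply (rule pmor_eqI)
     apply (rule mcomp_pmor[OF comp_iso_pmor linmap_pmor]; force)
    apply (rule lunit_pmor)
   apply (auto simp: lunit_def)
  done

lemma part8b: "mcomp (tri (lin T) (lin {()})) (lin T) (linmap (T \<times> {()}) fst) (comp_iso T {()}) = runit (lin T)"
  apply (rule pmor_eqI)
     apply (rule mcomp_pmor[OF comp_iso_pmor linmap_pmor]; force)
    apply (rule runit_pmor)
   apply (auto simp: runit_def)
  done

lemma dir_tri_gen: "dir (tri p q) x = Sigma (dir p (fst x)) (\<lambda>d. dir q (snd x d))"
  by (cases x) simp
lemma unit2_PiE[simp]: "(f::unit\<times>unit\<Rightarrow>_) \<in> {((), ())} \<rightarrow>\<^sub>E A \<longleftrightarrow> f ((), ()) \<in> A"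
  by (auto simp: PiE_iff extensional_def)

lemma assoc_fwd_pmor: "is_pmor (tri (tri p q) r) (tri p (tri q r)) (assoc_fwd p q r)"
  by (rule is_pmorI) (auto simp: assoc_fwd_def PiE_iff extensional_def)
lemma assoc_bwd_pmor: "is_pmor (tri p (tri q r)) (tri (tri p q) r) (assoc_bwd p q r)"
  by (rule is_pmorI) (auto simp: assoc_bwd_def PiE_iff extensional_def dir_tri_gen case_prod_unfold split: if_splits)

lemma assoc_fwd_fst[simp]: "((I, f), g) \<in> pos (tri (tri p q) r) \<Longrightarrow>
  fst (assoc_fwd p q r) ((I, f), g) = (I, \<lambda>d\<in>dir p I. (f d, \<lambda>e\<in>dir q (f d). g (d, e)))"
  by (simp add: assoc_fwd_def)
lemma assoc_fwd_snd[simp]: "((I, f), g) \<in> pos (tri (tri p q) r) \<Longrightarrow> d \<in> dir p I \<Longrightarrow> e \<in> dir q (f d) \<Longrightarrow>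
  x \<in> dir r (g (d, e)) \<Longrightarrow> snd (assoc_fwd p q r) ((I, f), g) (d, (e, x)) = ((d, e), x)"
  by (simp add: assoc_fwd_def)
lemma assoc_bwd_fst[simp]: "(I, h) \<in> pos (tri p (tri q r)) \<Longrightarrow>
  fst (assoc_bwd p q r) (I, h) = ((I, \<lambda>d\<in>dir p I. fst (h d)),
         \<lambda>(d, e)\<in>Sigma (dir p I) (\<lambda>d. dir q (fst (h d))). snd (h d) e)"
  by (simp add: assoc_bwd_def)
lemma assoc_bwd_snd[simp]: "(I, h) \<in> pos (tri p (tri q r)) \<Longrightarrow> d \<in> dir p I \<Longrightarrow> e \<in> dir q (fst (h d)) \<Longrightarrow>
  x \<in> dir r (snd (h d) e) \<Longrightarrow> snd (assoc_bwd p q r) (I, h) ((d, e), x) = (d, (e, x))"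
  by (simp add: assoc_bwd_def)

lemma part7: "mcomp (tri (tri (lin U) (lin T)) (lin S)) (lin (U \<times> (T \<times> S)))
        (linmap ((U \<times> T) \<times> S) (\<lambda>((u, t), s). (u, (t, s))))
        (mcomp (tri (tri (lin U) (lin T)) (lin S)) (lin ((U \<times> T) \<times> S))
           (comp_iso (U \<times> T) S)
           (tri_mor (tri (lin U) (lin T)) (lin S) (lin (U \<times> T)) (lin S) (comp_iso U T) (pid (lin S))))
      = mcomp (tri (tri (lin U) (lin T)) (lin S)) (lin (U \<times> (T \<times> S)))
          (comp_iso U (T \<times> S))
          (mcomp (tri (tri (lin U) (lin T)) (lin S)) (tri (lin U) (lin (T \<times> S)))
             (tri_mor (lin U) (tri (lin T) (lin S)) (lin U) (lin (T \<times> S)) (pid (lin U)) (comp_iso T S))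
             (assoc_fwd (lin U) (lin T) (lin S)))"
  apply (rule pmor_eqI)
     apply (rule mcomp_pmor[OF mcomp_pmor[OF tri_mor_pmor[OF comp_iso_pmor pid_pmor] comp_iso_pmor] linmap_pmor]; force)
    apply (rule mcomp_pmor[OF mcomp_pmor[OF assoc_fwd_pmor tri_mor_pmor[OF pid_pmor comp_iso_pmor]] comp_iso_pmor])
   apply auto
  done


lemma coalg_pos: "is_coalg p q S \<theta> \<Longrightarrow> x \<in> S \<Longrightarrow> J \<in> pos q \<Longrightarrow> fst (fst (\<theta> x)) J \<in> pos p"
  by (rule pmor_pos[OF coalgD(1)])
lemma coalg_dir: "is_coalg p q S \<theta> \<Longrightarrow> x \<in> S \<Longrightarrow> J \<in> pos q \<Longrightarrow> d \<in> dir p (fst (fst (\<theta> x)) J)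
   \<Longrightarrow> snd (fst (\<theta> x)) J d \<in> dir q J"
  by (rule pmor_dir[OF coalgD(1)])
lemma coalg_next: "is_coalg p q S \<theta> \<Longrightarrow> x \<in> S \<Longrightarrow> J \<in> pos q \<Longrightarrow> d \<in> dir p (fst (fst (\<theta> x)) J)
   \<Longrightarrow> snd (\<theta> x) (J, d) \<in> S"
  by (rule coalgD(2))

lemma org_comp_app: "t \<in> T \<Longrightarrow> s \<in> S \<Longrightarrow> org_comp p q r T \<theta> S \<eta> (t, s) =
       (mcomp r p (fst (\<theta> t)) (fst (\<eta> s)),
        \<lambda>(K, d)\<in>dir (ihom r p) (mcomp r p (fst (\<theta> t)) (fst (\<eta> s))).
          (snd (\<theta> t) (fst (fst (\<eta> s)) K, d),
           snd (\<eta> s) (K, snd (fst (\<theta> t)) (fst (fst (\<eta> s)) K) d)))"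
  by (simp add: org_comp_def)

lemma comp_iso_iso: "is_iso (tri (lin T) (lin S)) (lin (T \<times> S)) (comp_iso T S)"
  unfolding is_iso_def
proof (intro conjI exI[of _ "(\<lambda>(t, s)\<in>T \<times> S. (t, \<lambda>u. s), \<lambda>(t, s)\<in>T \<times> S. \<lambda>w\<in>{()} \<times> {()}. ())"])
  have d: "is_pmor (lin (T \<times> S)) (tri (lin T) (lin S)) (\<lambda>(t, s)\<in>T \<times> S. (t, \<lambda>u. s), \<lambda>(t, s)\<in>T \<times> S. \<lambda>w\<in>{()} \<times> {()}. ())"
    apply (rule is_pmorI) apply (simp_all add: split_beta mem_Times_iff)
    apply blast+
    done
  show "is_pmor (tri (lin T) (lin S)) (lin (T \<times> S)) (comp_iso T S)" by (rule comp_iso_pmor)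
  show "is_pmor (lin (T \<times> S)) (tri (lin T) (lin S)) (\<lambda>(t, s)\<in>T \<times> S. (t, \<lambda>u. s), \<lambda>(t, s)\<in>T \<times> S. \<lambda>w\<in>{()} \<times> {()}. ())"
    by (rule d)
  show "mcomp (tri (lin T) (lin S)) (tri (lin T) (lin S)) (\<lambda>(t, s)\<in>T \<times> S. (t, \<lambda>u. s), \<lambda>(t, s)\<in>T \<times> S. \<lambda>w\<in>{()} \<times> {()}. ()) (comp_iso T S) = pid (tri (lin T) (lin S))"
    apply (rule pmor_eqI[OF mcomp_pmor[OF comp_iso_pmor d] pid_pmor]) apply (auto simp: split_beta mem_Times_iff) done
  show "mcomp (lin (T \<times> S)) (lin (T \<times> S)) (comp_iso T S) (\<lambda>(t, s)\<in>T \<times> S. (t, \<lambda>u. s), \<lambda>(t, s)\<in>T \<times> S. \<lambda>w\<in>{()} \<times> {()}. ()) = pid (lin (T \<times> S))"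
    apply (rule pmor_eqI[OF mcomp_pmor[OF d comp_iso_pmor] pid_pmor]) apply (auto simp: split_beta mem_Times_iff) done
qed

lemma eff_comp_pmor: "is_pmor (tri s q) (tri p s) \<phi> \<Longrightarrow> is_pmor (tri t r) (tri q t) \<psi> \<Longrightarrow>
   is_pmor (tri (tri s t) r) (tri p (tri s t)) (eff_comp p q r s \<phi> t \<psi>)"
  unfolding eff_comp_def Let_def
  by (rule mcomp_pmor[OF mcomp_pmor[OF mcomp_pmor[OF mcomp_pmor[OF assoc_fwd_pmor tri_mor_pmor[OF pid_pmor]] assoc_bwd_pmor] tri_mor_pmor[OF _ pid_pmor]] assoc_fwd_pmor])

lemma org_comp_coalg:
  assumes c: "is_coalg p q T \<theta>" and c': "is_coalg q r S \<eta>"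
  shows "is_coalg p r (T \<times> S) (org_comp p q r T \<theta> S \<eta>)"
  unfolding is_coalg_def
proof (rule PiE_I)
  fix z assume "z \<in> T \<times> S"
  then obtain t s where z: "z = (t, s)" "t \<in> T" "s \<in> S" by auto
  have m: "is_pmor r p (mcomp r p (fst (\<theta> t)) (fst (\<eta> s)))"
    by (rule mcomp_pmor[OF coalgD(1)[OF c' z(3)] coalgD(1)[OF c z(2)]])
  have dm: "dir (ihom r p) (mcomp r p (fst (\<theta> t)) (fst (\<eta> s))) =
     Sigma (pos r) (\<lambda>K. dir p (fst (fst (\<theta> t)) (fst (fst (\<eta> s)) K)))"
    by (simp, rule Sigma_cong) auto
  show "org_comp p q r T \<theta> S \<eta> z \<in> pos (tri (ihom r p) (cpoly (T \<times> S)))"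
    unfolding z(1) org_comp_app[OF z(2,3)]
    using m by (simp add: dm restrict_PiE_iff coalg_pos[OF c'] coalg_pos[OF c] coalg_next[OF c] coalg_next[OF c'] coalg_dir[OF c] z(2,3) del: restrict_PiE)
next
  fix z assume "z \<notin> T \<times> S"
  then show "org_comp p q r T \<theta> S \<eta> z = undefined" by (simp add: org_comp_def)
qed

lemma part5b:
  assumes c: "is_coalg p q T \<theta>" and c': "is_coalg q r S \<eta>"
  shows "eff_sq p r (tri (lin T) (lin S)) (eff_comp p q r (lin T) (Phi p q T \<theta>) (lin S) (Phi q r S \<eta>))
             p r (lin (T \<times> S)) (Phi p r (T \<times> S) (org_comp p q r T \<theta> S \<eta>))
             (pid r) (pid p) (comp_iso T S)"
  unfolding eff_sq_def
proof (intro conjI comp_iso_pmor)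
  have oc: "is_coalg p r (T \<times> S) (org_comp p q r T \<theta> S \<eta>)" by (rule org_comp_coalg[OF c c'])
  note P1 = Phi_pmor[OF c] and P2 = Phi_pmor[OF c'] and P3 = Phi_pmor[OF oc]
  show "mcomp (tri (tri (lin T) (lin S)) r) (tri p (lin (T \<times> S)))
     (tri_mor p (tri (lin T) (lin S)) p (lin (T \<times> S)) (pid p) (comp_iso T S))
     (eff_comp p q r (lin T) (Phi p q T \<theta>) (lin S) (Phi q r S \<eta>)) =
    mcomp (tri (tri (lin T) (lin S)) r) (tri p (lin (T \<times> S))) (Phi p r (T \<times> S) (org_comp p q r T \<theta> S \<eta>))
     (tri_mor (tri (lin T) (lin S)) r (lin (T \<times> S)) r (comp_iso T S) (pid r))"
    apply (rule pmor_eqI)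
       apply (rule mcomp_pmor[OF eff_comp_pmor[OF P1 P2] tri_mor_pmor[OF pid_pmor comp_iso_pmor]])
      apply (rule mcomp_pmor[OF tri_mor_pmor[OF comp_iso_pmor pid_pmor] P3])
     apply clarsimp
     apply (simp add: Phi_snd eff_comp_def Let_def Phi_fst coalg_pos[OF c] coalg_pos[OF c'] coalg_next[OF c] coalg_next[OF c'] coalg_dir[OF c] coalg_dir[OF c'] org_comp_app restrict_PiE_iff del: restrict_PiE cong: restrict_cong)
    apply clarsimp
    apply (simp add: Phi_snd eff_comp_def Let_def Phi_fst coalg_pos[OF c] coalg_pos[OF c'] coalg_next[OF c] coalg_next[OF c'] coalg_dir[OF c] coalg_dir[OF c'] org_comp_app restrict_PiE_iff del: restrict_PiE)
    done
qed


lemma part9: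
  assumes h: "is_handler p q s \<eta>"
  shows "(\<exists>(S :: 'k set) \<theta> \<gamma>. is_coalg p q S \<theta> \<and> is_iso s (lin S) \<gamma> \<and>
          eff_sq p q s \<eta> p q (lin S) (Phi p q S \<theta>) (pid q) (pid p) \<gamma>)
       \<longleftrightarrow> (\<exists>(S :: 'k set) \<gamma>. is_iso s (lin S) \<gamma>)"
proof
  assume "\<exists>(S :: 'k set) \<theta> \<gamma>. is_coalg p q S \<theta> \<and> is_iso s (lin S) \<gamma> \<and>
          eff_sq p q s \<eta> p q (lin S) (Phi p q S \<theta>) (pid q) (pid p) \<gamma>"
  then show "\<exists>(S :: 'k set) \<gamma>. is_iso s (lin S) \<gamma>" by blast
next
  assume "\<exists>(S :: 'k set) \<gamma>. is_iso s (lin S) \<gamma>"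
  then obtain S :: "'k set" and \<gamma> where iso: "is_iso s (lin S) \<gamma>" by blast
  then obtain \<delta> where g: "is_pmor s (lin S) \<gamma>" and d: "is_pmor (lin S) s \<delta>"
    and dg: "mcomp s s \<delta> \<gamma> = pid s" and gd: "mcomp (lin S) (lin S) \<gamma> \<delta> = pid (lin S)"
    unfolding is_iso_def by blast
  have H: "is_pmor (tri s q) (tri p s) \<eta>" using h by (simp add: is_handler_def)
  define A where "A = tri_mor p s p (lin S) (pid p) \<gamma>"
  define B where "B = tri_mor (lin S) q s q \<delta> (pid q)"
  define C where "C = tri_mor s q (lin S) q \<gamma> (pid q)"
  have A: "is_pmor (tri p s) (tri p (lin S)) A" unfolding A_def by (rule tri_mor_pmor[OF pid_pmor g])
  have B: "is_pmor (tri (lin S) q) (tri s q) B" unfolding B_def by (rule tri_mor_pmor[OF d pid_pmor])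
  have C: "is_pmor (tri s q) (tri (lin S) q) C" unfolding C_def by (rule tri_mor_pmor[OF g pid_pmor])
  define \<eta>' where "\<eta>' = mcomp (tri (lin S) q) (tri p (lin S)) A (mcomp (tri (lin S) q) (tri p s) \<eta> B)"
  have h': "is_handler p q (lin S) \<eta>'" unfolding is_handler_def \<eta>'_def
    by (rule mcomp_pmor[OF mcomp_pmor[OF B H] A])
  define \<theta> where "\<theta> = Psi p q S \<eta>'"
  have c: "is_coalg p q S \<theta>" unfolding \<theta>_def by (rule Psi_coalg[OF h'])
  have P: "Phi p q S \<theta> = \<eta>'" unfolding \<theta>_def by (rule Phi_Psi[OF h'])
  have BC: "mcomp (tri s q) (tri s q) B C = pid (tri s q)"
    unfolding B_def C_def
    by (simp add: tri_mor_comp[OF g d pid_pmor pid_pmor] dg mcomp_pid_left[OF pid_pmor] tri_mor_pid)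
  have "mcomp (tri s q) (tri p (lin S)) \<eta>' C = mcomp (tri s q) (tri p (lin S)) A \<eta>"
  proof -
    have "mcomp (tri s q) (tri p (lin S)) \<eta>' C
        = mcomp (tri s q) (tri p (lin S)) (mcomp (tri s q) (tri p (lin S)) A \<eta>) (mcomp (tri s q) (tri s q) B C)"
      unfolding \<eta>'_def
      by (simp only: mcomp_assoc[OF B H A] mcomp_assoc[OF C B mcomp_pmor[OF H A]])
    also have "\<dots> = mcomp (tri s q) (tri p (lin S)) A \<eta>"
      unfolding BC by (rule mcomp_pid_right[OF mcomp_pmor[OF H A]])
    finally show ?thesis .
  qed
  then have sq: "eff_sq p q s \<eta> p q (lin S) (Phi p q S \<theta>) (pid q) (pid p) \<gamma>"
    unfolding eff_sq_def P A_def C_def using g by simp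
  show "\<exists>(S :: 'k set) \<theta> \<gamma>. is_coalg p q S \<theta> \<and> is_iso s (lin S) \<gamma> \<and>
          eff_sq p q s \<eta> p q (lin S) (Phi p q S \<theta>) (pid q) (pid p) \<gamma>"
    using c iso sq by blast
qed

theorem mainTheorem9:
  shows
  "\<comment> \<open>(1) on horizontal morphisms: the natural bijection, coalgebra structures on S
       \<longleftrightarrow> handler structures on S y (so the image consists of exactly the linear handlers)\<close>
   (\<forall>(p :: ('i, 'd) poly) (q :: ('j, 'e) poly) (S :: 's set).
      bij_betw (Phi p q S) {\<theta>. is_coalg p q S \<theta>} {\<eta>. is_handler p q (lin S) \<eta>})
   \<and>
   \<comment> \<open>(2) on squares f \<mapsto> f y: well defined, full and faithful\<close>
   (\<forall>(p :: ('i, 'd) poly) (q :: ('j, 'e) poly) (S :: 's set) \<theta>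
      (p' :: ('i2, 'd2) poly) (q' :: ('j2, 'e2) poly) (S' :: 's2 set) \<theta>' \<psi> \<phi>.
      is_coalg p q S \<theta> \<and> is_coalg p' q' S' \<theta>' \<and> is_pmor q q' \<psi> \<and> is_pmor p p' \<phi> \<longrightarrow>
      bij_betw (linmap S) {f. org_sq p q S \<theta> p' q' S' \<theta>' \<psi> \<phi> f}
        {\<gamma>. eff_sq p q (lin S) (Phi p q S \<theta>) p' q' (lin S') (Phi p' q' S' \<theta>') \<psi> \<phi> \<gamma>})
   \<and>
   \<comment> \<open>(3) preservation of vertical composition and identities of squares\<close>
   (\<forall>(S :: 's set) (S' :: 's2 set) (S'' :: 's3 set) f g.
      f \<in> S \<rightarrow>\<^sub>E S' \<longrightarrow>
      mcomp (lin S) (lin S'') (linmap S' g) (linmap S f) = linmap S (\<lambda>x. g (f x)))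
   \<and> (\<forall>(S :: 's set). linmap S (\<lambda>x. x) = pid (lin S))
   \<and>
   \<comment> \<open>(4) horizontal identities are preserved (strictly)\<close>
   (\<forall>(p :: ('i, 'd) poly). Phi p p {()} (org_id p) = eff_id p)
   \<and>
   \<comment> \<open>(5) compositor: an invertible globular square F(\<theta>) \<odot> F(\<eta>) \<Rightarrow> F(\<theta> \<odot> \<eta>)\<close>
   (\<forall>(p :: ('i, 'd) poly) (q :: ('j, 'e) poly) (r :: ('k, 'f) poly) (T :: 't set) \<theta> (S :: 's set) \<eta>.
      is_coalg p q T \<theta> \<and> is_coalg q r S \<eta> \<longrightarrow>
      is_iso (tri (lin T) (lin S)) (lin (T \<times> S)) (comp_iso T S) \<and>
      eff_sq p r (tri (lin T) (lin S)) (eff_comp p q r (lin T) (Phi p q T \<theta>) (lin S) (Phi q r S \<eta>))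
             p r (lin (T \<times> S)) (Phi p r (T \<times> S) (org_comp p q r T \<theta> S \<eta>))
             (pid r) (pid p) (comp_iso T S))
   \<and>
   \<comment> \<open>(6) naturality of the compositor w.r.t. horizontal composition of squares\<close>
   (\<forall>(T :: 't set) (T' :: 't2 set) (S :: 's set) (S' :: 's2 set) f g.
      f \<in> T \<rightarrow>\<^sub>E T' \<and> g \<in> S \<rightarrow>\<^sub>E S' \<longrightarrow>
      mcomp (tri (lin T) (lin S)) (lin (T' \<times> S')) (comp_iso T' S')
        (tri_mor (lin T) (lin S) (lin T') (lin S') (linmap T f) (linmap S g))
      = mcomp (tri (lin T) (lin S)) (lin (T' \<times> S'))
          (linmap (T \<times> S) (\<lambda>(t, s). (f t, g s))) (comp_iso T S))
   \<and>
   \<comment> \<open>(7) associativity coherence\<close>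
   (\<forall>(U :: 'u set) (T :: 't set) (S :: 's set).
      mcomp (tri (tri (lin U) (lin T)) (lin S)) (lin (U \<times> (T \<times> S)))
        (linmap ((U \<times> T) \<times> S) (\<lambda>((u, t), s). (u, (t, s))))
        (mcomp (tri (tri (lin U) (lin T)) (lin S)) (lin ((U \<times> T) \<times> S))
           (comp_iso (U \<times> T) S)
           (tri_mor (tri (lin U) (lin T)) (lin S) (lin (U \<times> T)) (lin S) (comp_iso U T) (pid (lin S))))
      = mcomp (tri (tri (lin U) (lin T)) (lin S)) (lin (U \<times> (T \<times> S)))
          (comp_iso U (T \<times> S))
          (mcomp (tri (tri (lin U) (lin T)) (lin S)) (tri (lin U) (lin (T \<times> S)))
             (tri_mor (lin U) (tri (lin T) (lin S)) (lin U) (lin (T \<times> S)) (pid (lin U)) (comp_iso T S))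
             (assoc_fwd (lin U) (lin T) (lin S))))
   \<and>
   \<comment> \<open>(8) unit coherence\<close>
   (\<forall>(T :: 't set).
      mcomp (tri (lin {()}) (lin T)) (lin T) (linmap ({()} \<times> T) snd) (comp_iso {()} T) = lunit (lin T)
      \<and> mcomp (tri (lin T) (lin {()})) (lin T) (linmap (T \<times> {()}) fst) (comp_iso T {()}) = runit (lin T))
   \<and>
   \<comment> \<open>(9) essential image: exactly the handlers whose carrier is (isomorphic to) linear\<close>
   (\<forall>(p :: ('i, 'd) poly) (q :: ('j, 'e) poly) (s :: ('k, 'f) poly) \<eta>.
      is_handler p q s \<eta> \<longrightarrow>
      ((\<exists>(S :: 'k set) \<theta> \<gamma>. is_coalg p q S \<theta> \<and> is_iso s (lin S) \<gamma> \<and>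
          eff_sq p q s \<eta> p q (lin S) (Phi p q S \<theta>) (pid q) (pid p) \<gamma>)
       \<longleftrightarrow> (\<exists>(S :: 'k set) \<gamma>. is_iso s (lin S) \<gamma>)))"
  apply (intro conjI)
  subgoal using part1 by blast
  subgoal using part2 by blast
  subgoal using part3a by blast
  subgoal using part3b by blast
  subgoal using part4 by blast
  subgoal using comp_iso_iso part5b by blast
  subgoal using part6 by blast
  subgoal using part7 by blast
  subgoal using part8a part8b by blast
  subgoal using part9 by blast
  done

end
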